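(* Let $K$ be a simplex in $\mathbb{R}^d$, $d\ge2$, belonging to a simplicial mesh with shape-regularity parameter $\vartheta_{\mathcal{T}}$, and let $p\ge0$. Then for every $\bm v\in\bm{RTN}_p(K)$, $$h_K\|\nabla\cdot\bm v\|_K\le\sqrt{2d}\,\vartheta_{\mathcal{T}}\,C_{p+1,d}\,\|\bm v\|_K.$$
   Context: $h_K$ is the diameter of $K$; $\vartheta_{\mathcal{T}}:=\max_{K}h_K/\rho_K$ over the mesh, with $\rho_K$ the diameter of the largest ball inscribed in $K$. $\bm{RTN}_p(K):=\mathbb{P}_p(K;\mathbb{R}^d)+\mathbb{P}_p(K)\bm x$. $C_{q,d}$ is the best constant such that $\|\partial_{x_i}v\|_{L^2(K^d)}\le C_{q,d}\|v\|_{L^2(K^d)}$ for all polynomials $v$ of total degree at most $q$ on the unit simplex $K^d:=\{x\in\mathbb{R}^d:x_i\ge0,\ \sum_ix_i\le1\}$ and all $i\in\{1,\dots,d\}$. Norms are $L^2(K)$ norms. *)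

theory Defs
  imports "HOL-Analysis.Analysis"
begin

definition multi_indices :: "nat \<Rightarrow> ('n::finite \<Rightarrow> nat) set" where
  "multi_indices q = {\<alpha>. (\<Sum>i\<in>UNIV. \<alpha> i) \<le> q}"

definition poly_fun :: "nat \<Rightarrow> (real^'n::finite \<Rightarrow> real) \<Rightarrow> bool" where
  "poly_fun q f \<longleftrightarrow> (\<exists>c :: ('n \<Rightarrow> nat) \<Rightarrow> real.
     f = (\<lambda>x. \<Sum>\<alpha>\<in>multi_indices q. c \<alpha> * (\<Prod>i\<in>UNIV. (x $ i) ^ (\<alpha> i))))"

definition vpoly_fun :: "nat \<Rightarrow> (real^'n::finite \<Rightarrow> real^'n) \<Rightarrow> bool" where
  "vpoly_fun q v \<longleftrightarrow> (\<forall>i. poly_fun q (\<lambda>x. v x $ i))"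

definition RTN :: "nat \<Rightarrow> (real^'n::finite \<Rightarrow> real^'n) set" where
  "RTN p = {v. \<exists>w r. vpoly_fun p w \<and> poly_fun p r \<and> v = (\<lambda>x. w x + r x *\<^sub>R x)}"

definition partial :: "'n::finite \<Rightarrow> (real^'n \<Rightarrow> real) \<Rightarrow> real^'n \<Rightarrow> real" where
  "partial i f x = deriv (\<lambda>t. f (x + t *\<^sub>R axis i 1)) 0"

definition divergence :: "(real^'n::finite \<Rightarrow> real^'n) \<Rightarrow> real^'n \<Rightarrow> real" where
  "divergence v x = (\<Sum>i\<in>UNIV. partial i (\<lambda>y. v y $ i) x)"

definition L2norm :: "(real^'n::finite) set \<Rightarrow> (real^'n \<Rightarrow> real) \<Rightarrow> real" where
  "L2norm K f = sqrt (integral K (\<lambda>x. (f x)\<^sup>2))"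

definition L2norm_vec :: "(real^'n::finite) set \<Rightarrow> (real^'n \<Rightarrow> real^'n) \<Rightarrow> real" where
  "L2norm_vec K v = sqrt (integral K (\<lambda>x. (norm (v x))\<^sup>2))"

definition unit_simplex :: "(real^'n::finite) set" where
  "unit_simplex = {x. (\<forall>i. 0 \<le> x $ i) \<and> (\<Sum>i\<in>UNIV. x $ i) \<le> 1}"

definition Cqd :: "'n::finite itself \<Rightarrow> nat \<Rightarrow> real" where
  "Cqd _ q = Inf {C. \<forall>(v :: real^'n \<Rightarrow> real) i. poly_fun q v \<longrightarrow>
      L2norm unit_simplex (partial i v) \<le> C * L2norm unit_simplex v}"

definition inball_diam :: "(real^'n::finite) set \<Rightarrow> real" where
  "inball_diam K = 2 * Sup {r. \<exists>c. ball c r \<subseteq> K}"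

definition simplicial_mesh :: "(real^'n::finite) set set \<Rightarrow> bool" where
  "simplicial_mesh T \<longleftrightarrow> finite T \<and> (\<forall>K\<in>T. (int CARD('n)) simplex K) \<and>
     (\<forall>K\<in>T. \<forall>K'\<in>T. K \<noteq> K' \<longrightarrow> interior K \<inter> interior K' = {})"

definition shape_reg :: "(real^'n::finite) set set \<Rightarrow> real" where
  "shape_reg T = Max ((\<lambda>K. diameter K / inball_diam K) ` T)"

end

theory Submission
  imports Defs
begin

definition mono_fun :: "('n::finite \<Rightarrow> nat) \<Rightarrow> real^'n \<Rightarrow> real" where
  "mono_fun \<alpha> x = (\<Prod>i\<in>UNIV. (x $ i) ^ (\<alpha> i))"

lemma finite_multi_indices: "finite (multi_indices q :: ('n::finite \<Rightarrow> nat) set)"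
proof -
  have "multi_indices q \<subseteq> (PiE UNIV (\<lambda>_::'n. {..q}))"
  proof
    fix \<alpha> :: "'n \<Rightarrow> nat" assume "\<alpha> \<in> multi_indices q"
    then have s: "(\<Sum>i\<in>UNIV. \<alpha> i) \<le> q" by (simp add: multi_indices_def)
    have "\<alpha> i \<le> q" for i
      using member_le_sum[of i UNIV \<alpha>] s by auto
    then show "\<alpha> \<in> PiE UNIV (\<lambda>_::'n. {..q})" by (auto simp: PiE_def extensional_def)
  qed
  moreover have "finite (PiE UNIV (\<lambda>_::'n. {..q}))" by (rule finite_PiE) auto
  ultimately show ?thesis by (rule finite_subset)
qed

lemma poly_fun_alt: "poly_fun q f \<longleftrightarrow> (\<exists>c. f = (\<lambda>x. \<Sum>\<alpha>\<in>multi_indices q. c \<alpha> * mono_fun \<alpha> x))"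
  by (simp add: poly_fun_def mono_fun_def)

lemma poly_fun_zero: "poly_fun q (\<lambda>x. 0)"
  unfolding poly_fun_alt by (rule exI[of _ "\<lambda>_. 0"]) simp

lemma poly_fun_add:
  assumes "poly_fun q f" "poly_fun q g" shows "poly_fun q (\<lambda>x. f x + g x)"
proof -
  obtain c d where "f = (\<lambda>x. \<Sum>\<alpha>\<in>multi_indices q. c \<alpha> * mono_fun \<alpha> x)"
      "g = (\<lambda>x. \<Sum>\<alpha>\<in>multi_indices q. d \<alpha> * mono_fun \<alpha> x)"
    using assms unfolding poly_fun_alt by blast
  then show ?thesis unfolding poly_fun_alt
    by (intro exI[of _ "\<lambda>\<alpha>. c \<alpha> + d \<alpha>"]) (simp add: sum.distrib distrib_right)
qed

lemma poly_fun_cmult: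
  assumes "poly_fun q f" shows "poly_fun q (\<lambda>x. a * f x)"
proof -
  obtain c where "f = (\<lambda>x. \<Sum>\<alpha>\<in>multi_indices q. c \<alpha> * mono_fun \<alpha> x)"
    using assms unfolding poly_fun_alt by blast
  then show ?thesis unfolding poly_fun_alt
    by (intro exI[of _ "\<lambda>\<alpha>. a * c \<alpha>"]) (simp add: sum_distrib_left mult.assoc)
qed

lemma poly_fun_sum:
  assumes "finite S" "\<And>s. s \<in> S \<Longrightarrow> poly_fun q (f s)"
  shows "poly_fun q (\<lambda>x. \<Sum>s\<in>S. f s x)"
  using assms by (induction S rule: finite_induct) (auto intro: poly_fun_zero poly_fun_add)

lemma poly_fun_term:
  assumes "\<gamma> \<in> multi_indices q" shows "poly_fun q (\<lambda>x. a * mono_fun \<gamma> x)"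
  unfolding poly_fun_alt
proof (intro exI[of _ "\<lambda>\<alpha>. if \<alpha> = \<gamma> then a else 0"])
  show "(\<lambda>x. a * mono_fun \<gamma> x) = (\<lambda>x. \<Sum>\<alpha>\<in>multi_indices q. (if \<alpha> = \<gamma> then a else 0) * mono_fun \<alpha> x)"
  proof
    fix x
    have "(\<Sum>\<alpha>\<in>multi_indices q. (if \<alpha> = \<gamma> then a else 0) * mono_fun \<alpha> x)
        = (\<Sum>\<alpha>\<in>multi_indices q. if \<alpha> = \<gamma> then a * mono_fun \<alpha> x else 0)"
      by (rule sum.cong) auto
    also have "\<dots> = a * mono_fun \<gamma> x" using assms by (simp add: sum.delta[OF finite_multi_indices])
    finally show "a * mono_fun \<gamma> x = (\<Sum>\<alpha>\<in>multi_indices q. (if \<alpha> = \<gamma> then a else 0) * mono_fun \<alpha> x)" by simp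
  qed
qed

lemma poly_fun_mono:
  assumes "poly_fun a f" "a \<le> b" shows "poly_fun b f"
proof -
  obtain c where f: "f = (\<lambda>x. \<Sum>\<alpha>\<in>multi_indices a. c \<alpha> * mono_fun \<alpha> x)"
    using assms unfolding poly_fun_alt by blast
  have "multi_indices a \<subseteq> multi_indices b" using assms(2) by (auto simp: multi_indices_def)
  then show ?thesis unfolding f
    by (intro poly_fun_sum finite_multi_indices poly_fun_term) auto
qed

lemma mono_fun_mult: "mono_fun \<alpha> x * mono_fun \<beta> x = mono_fun (\<lambda>i. \<alpha> i + \<beta> i) x"
  by (simp add: mono_fun_def power_add prod.distrib)

lemma poly_fun_mult:
  fixes f g :: "real^'n::finite \<Rightarrow> real"
  assumes "poly_fun a f" "poly_fun b g" shows "poly_fun (a + b) (\<lambda>x. f x * g x)"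
proof -
  obtain c d where f: "f = (\<lambda>x. \<Sum>\<alpha>\<in>multi_indices a. c \<alpha> * mono_fun \<alpha> x)"
      and g: "g = (\<lambda>x. \<Sum>\<alpha>\<in>multi_indices b. d \<alpha> * mono_fun \<alpha> x)"
    using assms unfolding poly_fun_alt by blast
  have eq: "(\<lambda>x. f x * g x) = (\<lambda>x. \<Sum>\<alpha>\<in>multi_indices a. \<Sum>\<beta>\<in>multi_indices b.
       (c \<alpha> * d \<beta>) * mono_fun (\<lambda>i. \<alpha> i + \<beta> i) x)"
    unfolding f g by (simp add: sum_product mono_fun_mult[symmetric] algebra_simps)
  show ?thesis unfolding eq
  proof (intro poly_fun_sum finite_multi_indices poly_fun_term)
    fix \<alpha> \<beta> :: "'n \<Rightarrow> nat" assume "\<alpha> \<in> multi_indices a" "\<beta> \<in> multi_indices b"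
    then show "(\<lambda>i. \<alpha> i + \<beta> i) \<in> multi_indices (a + b)"
      by (simp add: multi_indices_def sum.distrib)
  qed
qed

lemma poly_fun_const: "poly_fun q (\<lambda>x::real^'n::finite. a)"
proof -
  have "(\<lambda>_::'n. 0::nat) \<in> multi_indices q" by (simp add: multi_indices_def)
  from poly_fun_term[OF this, of a] show ?thesis by (simp add: mono_fun_def)
qed

lemma poly_fun_coord: "poly_fun 1 (\<lambda>x::real^'n::finite. x $ j)"
proof -
  have m: "(\<lambda>i::'n. if i = j then 1::nat else 0) \<in> multi_indices 1"
    by (simp add: multi_indices_def)
  have "mono_fun (\<lambda>i::'n. if i = j then 1::nat else 0) x = x $ j" for x :: "real^'n"
    unfolding mono_fun_def by (simp add: if_distrib prod.delta cong: if_cong)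
  with poly_fun_term[OF m, of 1] show ?thesis by simp
qed

lemma poly_fun_power:
  assumes "poly_fun a f" shows "poly_fun (k * a) (\<lambda>x. f x ^ k)"
proof (induction k)
  case 0 then show ?case using poly_fun_const[of 0 1] by simp
next
  case (Suc k)
  from poly_fun_mult[OF assms Suc] show ?case by (simp add: add.commute)
qed

lemma poly_fun_prod:
  assumes "finite S" "\<And>s. s \<in> S \<Longrightarrow> poly_fun (a s) (f s)"
  shows "poly_fun (\<Sum>s\<in>S. a s) (\<lambda>x. \<Prod>s\<in>S. f s x)"
  using assms
proof (induction S rule: finite_induct)
  case empty then show ?case using poly_fun_const[of 0 1] by simp
next
  case (insert s S)
  then show ?case using poly_fun_mult[of "a s" "f s" "sum a S" "\<lambda>x. \<Prod>s\<in>S. f s x"] by simp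
qed

lemma poly_fun_compose:
  fixes f :: "real^'n::finite \<Rightarrow> real" and G :: "real^'m::finite \<Rightarrow> real^'n"
  assumes "poly_fun q f" "\<And>i. poly_fun 1 (\<lambda>x. G x $ i)"
  shows "poly_fun q (\<lambda>x. f (G x))"
proof -
  obtain c where f: "f = (\<lambda>x. \<Sum>\<alpha>\<in>multi_indices q. c \<alpha> * mono_fun \<alpha> x)"
    using assms unfolding poly_fun_alt by blast
  show ?thesis unfolding f
  proof (intro poly_fun_sum finite_multi_indices poly_fun_cmult)
    fix \<alpha> :: "'n \<Rightarrow> nat" assume a: "\<alpha> \<in> multi_indices q"
    have "poly_fun (\<Sum>i\<in>UNIV. \<alpha> i * 1) (\<lambda>x. \<Prod>i\<in>UNIV. (G x $ i) ^ \<alpha> i)"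
      by (intro poly_fun_prod poly_fun_power assms) auto
    then have "poly_fun q (\<lambda>x. \<Prod>i\<in>UNIV. (G x $ i) ^ \<alpha> i)"
      by (rule poly_fun_mono) (use a in \<open>simp add: multi_indices_def\<close>)
    then show "poly_fun q (\<lambda>x. mono_fun \<alpha> (G x))" by (simp add: mono_fun_def)
  qed
qed

lemma poly_fun_minus:
  assumes "poly_fun q f" "poly_fun q g" shows "poly_fun q (\<lambda>x. f x - g x)"
  using poly_fun_add[OF assms(1) poly_fun_cmult[OF assms(2), of "-1"]] by simp

lemma partial_eq:
  fixes f :: "real^'n::finite \<Rightarrow> real"
  assumes "(f has_derivative D) (at x)"
  shows "partial i f x = D (axis i 1)"
proof -
  have l: "linear D" using assms has_derivative_linear by blast
  have "((\<lambda>t::real. x + t *\<^sub>R axis i 1) has_derivative (\<lambda>t. t *\<^sub>R axis i 1)) (at 0)"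
    by (auto intro!: derivative_eq_intros)
  from has_derivative_compose[OF this] assms
  have "((\<lambda>t. f (x + t *\<^sub>R axis i 1)) has_derivative (\<lambda>t. D (t *\<^sub>R axis i 1))) (at 0)"
    by simp
  moreover have "(\<lambda>t. D (t *\<^sub>R axis i 1)) = (*) (D (axis i 1))"
    using linear_scale[OF l] by (auto simp: fun_eq_iff)
  ultimately have "((\<lambda>t. f (x + t *\<^sub>R axis i 1)) has_field_derivative D (axis i 1)) (at 0)"
    by (simp add: has_field_derivative_def)
  then show ?thesis unfolding partial_def by (rule DERIV_imp_deriv)
qed

lemma partial_add:
  fixes f g :: "real^'n::finite \<Rightarrow> real"
  assumes "f differentiable (at x)" "g differentiable (at x)"
  shows "partial i (\<lambda>y. f y + g y) x = partial i f x + partial i g x"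
proof -
  obtain Df Dg where f: "(f has_derivative Df) (at x)" and g: "(g has_derivative Dg) (at x)"
    using assms unfolding differentiable_def by blast
  show ?thesis using has_derivative_add[OF f g]
    by (simp add: partial_eq[OF f] partial_eq[OF g] partial_eq)
qed

lemma partial_mult:
  fixes f g :: "real^'n::finite \<Rightarrow> real"
  assumes "f differentiable (at x)" "g differentiable (at x)"
  shows "partial i (\<lambda>y. f y * g y) x = partial i f x * g x + f x * partial i g x"
proof -
  obtain Df Dg where f: "(f has_derivative Df) (at x)" and g: "(g has_derivative Dg) (at x)"
    using assms unfolding differentiable_def by blast
  show ?thesis using has_derivative_mult[OF f g]
    by (simp add: partial_eq[OF f] partial_eq[OF g] partial_eq)
qed

lemma partial_cmult:
  fixes f :: "real^'n::finite \<Rightarrow> real"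
  assumes "f differentiable (at x)"
  shows "partial i (\<lambda>y. c * f y) x = c * partial i f x"
proof -
  obtain Df where f: "(f has_derivative Df) (at x)"
    using assms unfolding differentiable_def by blast
  show ?thesis using has_derivative_mult_right[OF f, of c]
    by (simp add: partial_eq[OF f] partial_eq)
qed

lemma partial_const: "partial i (\<lambda>y::real^'n::finite. c) x = 0"
  using partial_eq[of "\<lambda>y::real^'n. c" "\<lambda>_. 0" x i] by simp

lemma partial_coord: "partial i (\<lambda>y::real^'n::finite. y $ j) x = (if j = i then 1 else 0)"
proof -
  have "((\<lambda>y::real^'n. y $ j) has_derivative (\<lambda>y. y $ j)) (at x)"
    by (simp add: bounded_linear_imp_has_derivative bounded_linear_vec_nth)
  from partial_eq[OF this, of i] show ?thesis by (simp add: axis_def)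
qed

lemma partial_const_fun: "partial i (\<lambda>y::real^'n::finite. c) = (\<lambda>_. 0)"
  by (simp add: fun_eq_iff partial_const)

lemma partial_coord_fun: "partial i (\<lambda>y::real^'n::finite. y $ j) = (\<lambda>_. if j = i then 1 else 0)"
  by (simp add: fun_eq_iff partial_coord)

lemma partial_sum:
  fixes f :: "'a \<Rightarrow> real^'n::finite \<Rightarrow> real"
  assumes "finite S" "\<And>s. s \<in> S \<Longrightarrow> f s differentiable (at x)"
  shows "partial i (\<lambda>y. \<Sum>s\<in>S. f s y) x = (\<Sum>s\<in>S. partial i (f s) x)"
  using assms
proof (induction S rule: finite_induct)
  case empty then show ?case by (simp add: partial_const)
next
  case (insert s S)
  have "(\<lambda>y. \<Sum>s\<in>S. f s y) differentiable (at x)"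
    using insert by (intro differentiable_sum) auto
  then show ?case using insert by (simp add: partial_add)
qed

lemma partial_locally_zero:
  fixes f :: "real^'n::finite \<Rightarrow> real"
  assumes "r > 0" "\<And>y. y \<in> ball x r \<Longrightarrow> f y = 0"
  shows "partial i f x = 0"
proof -
  have "((\<lambda>t::real. 0::real) has_field_derivative 0) (at 0)" by simp
  then have "((\<lambda>t. f (x + t *\<^sub>R axis i 1)) has_field_derivative 0) (at 0)"
  proof (rule has_field_derivative_transform_within_open[where S="ball 0 r"])
    fix t :: real assume "t \<in> ball 0 r"
    then have "x + t *\<^sub>R axis i 1 \<in> ball x r" by (simp add: dist_norm)
    then show "0 = f (x + t *\<^sub>R axis i 1)" using assms by simp
  qed (use assms in auto)
  then show ?thesis unfolding partial_def by (rule DERIV_imp_deriv)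
qed

lemma mono_fun_differentiable: "mono_fun \<alpha> differentiable (at x)"
proof -
  have "(\<lambda>x. \<Prod>i\<in>S. (x $ i) ^ (\<alpha> i)) differentiable (at x)" if "finite S" for S
    using that
  proof (induction S rule: finite_induct)
    case empty then show ?case by simp
  next
    case (insert s S)
    have "(\<lambda>x::real^'a. x $ s) differentiable (at x)"
      by (simp add: bounded_linear_imp_differentiable bounded_linear_vec_nth)
    then have "(\<lambda>x::real^'a. (x $ s) ^ (\<alpha> s)) differentiable (at x)"
      by (rule differentiable_power)
    from differentiable_mult[OF this insert.IH] insert show ?case by simp
  qed
  then show ?thesis unfolding mono_fun_def[abs_def] by simp
qed

lemma poly_differentiable:
  assumes "poly_fun q f" shows "f differentiable (at x)"
proof -
  obtain c where f: "f = (\<lambda>x. \<Sum>\<alpha>\<in>multi_indices q. c \<alpha> * mono_fun \<alpha> x)"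
    using assms unfolding poly_fun_alt by blast
  show ?thesis unfolding f
    by (intro differentiable_sum finite_multi_indices ballI differentiable_mult
        mono_fun_differentiable differentiable_const)
qed

lemma mono_fun_continuous: "continuous_on S (mono_fun \<alpha>)"
  unfolding mono_fun_def[abs_def] by (intro continuous_intros)

lemma poly_continuous:
  assumes "poly_fun q f" shows "continuous_on S f"
proof -
  obtain c where f: "f = (\<lambda>x. \<Sum>\<alpha>\<in>multi_indices q. c \<alpha> * mono_fun \<alpha> x)"
    using assms unfolding poly_fun_alt by blast
  show ?thesis unfolding f
    by (intro continuous_intros mono_fun_continuous)
qed

definition pp :: "(real^'n::finite \<Rightarrow> real) \<Rightarrow> bool" where
  "pp f \<longleftrightarrow> (\<exists>q. poly_fun q f)"

lemma pp_add: "pp f \<Longrightarrow> pp g \<Longrightarrow> pp (\<lambda>x. f x + g x)"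
  unfolding pp_def
proof (elim exE)
  fix a b assume "poly_fun a f" "poly_fun b g"
  then have "poly_fun (max a b) f" "poly_fun (max a b) g" by (auto elim: poly_fun_mono)
  then show "\<exists>q. poly_fun q (\<lambda>x. f x + g x)" by (blast intro: poly_fun_add)
qed

lemma pp_mult: "pp f \<Longrightarrow> pp g \<Longrightarrow> pp (\<lambda>x. f x * g x)"
  unfolding pp_def by (blast intro: poly_fun_mult)

lemma pp_const: "pp (\<lambda>x. c)"
  unfolding pp_def by (blast intro: poly_fun_const)

lemma pp_sum: "finite S \<Longrightarrow> (\<And>s. s \<in> S \<Longrightarrow> pp (f s)) \<Longrightarrow> pp (\<lambda>x. \<Sum>s\<in>S. f s x)"
  by (induction S rule: finite_induct) (auto intro: pp_add pp_const)

lemma pp_diff: "pp f \<Longrightarrow> pp g \<Longrightarrow> pp (\<lambda>x. f x - g x)"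
proof -
  assume a: "pp f" "pp g"
  have "pp (\<lambda>x. (-1) * g x)" by (rule pp_mult[OF pp_const a(2)])
  from pp_add[OF a(1) this] show ?thesis by simp
qed

definition good :: "'n::finite \<Rightarrow> (real^'n \<Rightarrow> real) \<Rightarrow> bool" where
  "good i f \<longleftrightarrow> pp f \<and> pp (partial i f) \<and> (\<forall>x. f differentiable (at x))"

lemma good_const: "good i (\<lambda>x. c)"
  by (simp add: good_def partial_const_fun pp_const)

lemma good_coord: "good i (\<lambda>x. x $ j)"
  unfolding good_def pp_def
  by (auto simp: partial_coord_fun intro: poly_fun_coord poly_fun_const
      bounded_linear_imp_differentiable bounded_linear_vec_nth)

lemma good_mult:
  assumes "good i f" "good i g" shows "good i (\<lambda>x. f x * g x)"
proof -
  have eq: "partial i (\<lambda>x. f x * g x) = (\<lambda>x. partial i f x * g x + f x * partial i g x)"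
    using assms by (simp add: good_def partial_mult fun_eq_iff)
  show ?thesis using assms unfolding good_def eq
    by (auto intro!: pp_add pp_mult differentiable_mult)
qed

lemma good_power: "good i f \<Longrightarrow> good i (\<lambda>x. f x ^ k)"
  by (induction k) (auto simp: good_const intro: good_mult[simplified])

lemma good_prod: "finite S \<Longrightarrow> (\<And>s. s \<in> S \<Longrightarrow> good i (f s)) \<Longrightarrow> good i (\<lambda>x. \<Prod>s\<in>S. f s x)"
  by (induction S rule: finite_induct) (auto simp: good_const intro: good_mult[simplified])

lemma good_mono_fun: "good i (mono_fun \<alpha>)"
  unfolding mono_fun_def[abs_def] by (intro good_prod good_power good_coord) auto

lemma pp_partial:
  assumes "poly_fun q f" shows "pp (partial i f)"
proof -
  obtain c where f: "f = (\<lambda>x. \<Sum>\<alpha>\<in>multi_indices q. c \<alpha> * mono_fun \<alpha> x)"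
    using assms unfolding poly_fun_alt by blast
  have "partial i f = (\<lambda>x. \<Sum>\<alpha>\<in>multi_indices q. c \<alpha> * partial i (mono_fun \<alpha>) x)"
    unfolding f
    by (auto simp: fun_eq_iff partial_sum finite_multi_indices partial_cmult mono_fun_differentiable
        intro!: differentiable_mult)
  then show ?thesis
    using good_mono_fun[of i] by (auto simp: good_def intro!: pp_sum finite_multi_indices pp_mult pp_const)
qed

lemma pp_differentiable: "pp f \<Longrightarrow> f differentiable (at x)"
  unfolding pp_def using poly_differentiable by blast

lemma pp_continuous: "pp f \<Longrightarrow> continuous_on S f"
  unfolding pp_def using poly_continuous by blast

lemma pp_partial': "pp f \<Longrightarrow> pp (partial i f)"
  by (metis pp_def pp_partial)

lemma quad_disc: fixes a b c :: real assumes "\<And>t. 0 \<le> a + 2*b*t + c*t^2" "c \<ge> 0" shows "b^2 \<le> a*c"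
proof (cases "c = 0")
  case True
  have h: "0 \<le> a + 2*b*t" for t using assms(1)[of t] True by simp
  have "b = 0"
  proof (rule ccontr)
    assume b: "b \<noteq> 0"
    have "2*b*(-(\<bar>a\<bar>+1)/(2*b)) = -(\<bar>a\<bar>+1)" using b by (simp add: field_simps)
    then have "a + 2*b*(-(\<bar>a\<bar>+1)/(2*b)) < 0" by linarith
    with h show False by (meson not_le)
  qed
  then show ?thesis using True by simp
next
  case False
  then have c: "c > 0" using assms(2) by simp
  have "0 \<le> a + 2*b*(-b/c) + c*(-b/c)^2" by (rule assms(1))
  also have "\<dots> = (a*c - b^2)/c" using c by (simp add: field_simps power2_eq_square)
  finally show ?thesis using c by (simp add: divide_nonneg_pos zero_le_divide_iff)
qed

lemma int_cont:
  fixes f :: "real^'n::finite \<Rightarrow> real"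
  assumes "compact S" "continuous_on S f" shows "f integrable_on S"
  using borel_integrable_compact[OF assms] set_borel_integral_eq_integral(1)
  unfolding set_integrable_def by blast

definition ip :: "(real^'n::finite) set \<Rightarrow> (real^'n \<Rightarrow> real) \<Rightarrow> (real^'n \<Rightarrow> real) \<Rightarrow> real" where
  "ip S f g = integral S (\<lambda>x. f x * g x)"

locale cset =
  fixes S :: "(real^'n::finite) set"
  assumes cpt: "compact S"
begin

lemma integrable_prod:
  fixes f g :: "real^'n \<Rightarrow> real"
  assumes "continuous_on S f" "continuous_on S g" shows "(\<lambda>x. f x * g x) integrable_on S"
  using int_cont[OF cpt, of "\<lambda>x. f x * g x"] continuous_on_mult[OF assms] by simp

lemma ip_add_left:
  assumes "continuous_on S f" "continuous_on S g" "continuous_on S h"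
  shows "ip S (\<lambda>x. f x + g x) h = ip S f h + ip S g h"
  unfolding ip_def distrib_right
  by (rule integral_add; rule integrable_prod; fact)

lemma ip_cmult_left: "ip S (\<lambda>x. c * f x) h = c * ip S f h"
  unfolding ip_def by (simp add: mult.assoc)

lemma ip_sym: "ip S f g = ip S g f"
  unfolding ip_def by (simp add: mult.commute)

lemma ip_nonneg': "0 \<le> ip S f f"
  unfolding ip_def
  by (cases "(\<lambda>x. f x * f x) integrable_on S") (auto intro: integral_nonneg simp: not_integrable_integral)

lemma ip_nonneg: "continuous_on S f \<Longrightarrow> 0 \<le> ip S f f"
  by (rule ip_nonneg')

lemma ip_sum_left:
  assumes "finite I" "\<And>j. j \<in> I \<Longrightarrow> continuous_on S (f j)" "continuous_on S h"
  shows "ip S (\<lambda>x. \<Sum>j\<in>I. f j x) h = (\<Sum>j\<in>I. ip S (f j) h)"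
  using assms
proof (induction I rule: finite_induct)
  case empty then show ?case by (simp add: ip_def)
next
  case (insert j I)
  have "ip S (\<lambda>x. \<Sum>j\<in>insert j I. f j x) h = ip S (\<lambda>x. f j x + (\<Sum>j\<in>I. f j x)) h"
    using insert by simp
  also have "\<dots> = ip S (f j) h + ip S (\<lambda>x. \<Sum>j\<in>I. f j x) h"
    using insert by (intro ip_add_left) (auto intro!: continuous_intros)
  finally show ?case using insert by simp
qed

lemma ip_expand:
  assumes "continuous_on S f" "continuous_on S g"
  shows "ip S (\<lambda>x. f x + t * g x) (\<lambda>x. f x + t * g x) = ip S f f + 2 * t * ip S f g + t^2 * ip S g g"
proof -
  have e: "(\<lambda>x. (f x + t * g x) * (f x + t * g x)) = (\<lambda>x. f x * f x + (2 * t) * (f x * g x) + t^2 * (g x * g x))"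
    by (auto simp: fun_eq_iff algebra_simps power2_eq_square)
  have i1: "(\<lambda>x. f x * f x) integrable_on S" "(\<lambda>x. f x * g x) integrable_on S"
      "(\<lambda>x. g x * g x) integrable_on S"
    using assms by (auto intro: integrable_prod)
  have "integral S (\<lambda>x. f x * f x + (2 * t) * (f x * g x) + t^2 * (g x * g x))
      = integral S (\<lambda>x. f x * f x + (2 * t) * (f x * g x)) + integral S (\<lambda>x. t^2 * (g x * g x))"
    by (rule integral_add) (use i1 in \<open>auto intro: integrable_add integrable_on_mult_right\<close>)
  also have "integral S (\<lambda>x. f x * f x + (2 * t) * (f x * g x))
      = integral S (\<lambda>x. f x * f x) + integral S (\<lambda>x. (2 * t) * (f x * g x))"
    by (rule integral_add) (use i1 in \<open>auto intro: integrable_on_mult_right\<close>)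
  finally have "integral S (\<lambda>x. f x * f x + (2 * t) * (f x * g x) + t^2 * (g x * g x))
      = ip S f f + 2 * t * ip S f g + t^2 * ip S g g"
    unfolding ip_def by (simp only: integral_mult_right)
  then show ?thesis unfolding ip_def e .
qed

lemma cauchy_schwarz:
  assumes "continuous_on S f" "continuous_on S g"
  shows "(ip S f g)^2 \<le> ip S f f * ip S g g"
proof (rule quad_disc)
  fix t
  have "0 \<le> ip S (\<lambda>x. f x + t * g x) (\<lambda>x. f x + t * g x)"
    by (rule ip_nonneg) (intro continuous_intros assms)
  then show "0 \<le> ip S f f + 2 * ip S f g * t + ip S g g * t\<^sup>2"
    using ip_expand[OF assms, of t] by (simp add: algebra_simps)
qed (rule ip_nonneg[OF assms(2)])

definition N :: "(real^'n \<Rightarrow> real) \<Rightarrow> real" where "N f = sqrt (ip S f f)"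

lemma N_L2: "N f = L2norm S f"
  by (simp add: N_def L2norm_def ip_def power2_eq_square)

lemma N_sq: assumes "continuous_on S f" shows "(N f)^2 = ip S f f"
  using ip_nonneg[OF assms] by (simp add: N_def)

lemma N_nonneg: "0 \<le> N f" using ip_nonneg'[of f] by (simp add: N_def)

lemma ip_le_N: assumes "continuous_on S f" "continuous_on S g" shows "\<bar>ip S f g\<bar> \<le> N f * N g"
proof -
  have "\<bar>ip S f g\<bar>^2 = (ip S f g)^2" by simp
  also have "\<dots> \<le> ip S f f * ip S g g" by (rule cauchy_schwarz[OF assms])
  also have "\<dots> = (N f)^2 * (N g)^2" by (simp only: N_sq[OF assms(1)] N_sq[OF assms(2)])
  also have "\<dots> = (N f * N g)^2" by (simp only: power_mult_distrib)
  finally have "\<bar>ip S f g\<bar>^2 \<le> (N f * N g)^2" .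
  moreover have "0 \<le> N f * N g" using N_nonneg by simp
  ultimately show ?thesis by (rule power2_le_imp_le)
qed

lemma N_add: assumes "continuous_on S f" "continuous_on S g"
  shows "N (\<lambda>x. f x + t * g x) \<le> N f + \<bar>t\<bar> * N g"
proof -
  have "(N (\<lambda>x. f x + t * g x))^2 = ip S f f + 2 * t * ip S f g + t^2 * ip S g g"
    using assms by (simp add: N_sq ip_expand continuous_intros)
  also have "\<dots> \<le> (N f)^2 + 2 * \<bar>t\<bar> * (N f * N g) + t^2 * (N g)^2"
  proof -
    have "2 * t * ip S f g \<le> 2 * \<bar>t\<bar> * (N f * N g)"
    proof -
      have "2 * t * ip S f g \<le> \<bar>2 * t * ip S f g\<bar>" by simp
      also have "\<dots> = (2 * \<bar>t\<bar>) * \<bar>ip S f g\<bar>" by (simp add: abs_mult)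
      also have "\<dots> \<le> (2 * \<bar>t\<bar>) * (N f * N g)"
        by (rule mult_left_mono[OF ip_le_N[OF assms]]) simp
      finally show ?thesis by simp
    qed
    then show ?thesis using assms by (simp add: N_sq)
  qed
  also have "\<dots> = (N f + \<bar>t\<bar> * N g)^2" by (simp add: power2_eq_square algebra_simps)
  finally show ?thesis
    by (meson N_nonneg abs_ge_zero add_nonneg_nonneg mult_nonneg_nonneg power2_le_imp_le)
qed

lemma N_cmult: "N (\<lambda>x. t * f x) = \<bar>t\<bar> * N f"
proof -
  have "ip S (\<lambda>x. t * f x) (\<lambda>x. t * f x) = t^2 * ip S f f"
    unfolding ip_def by (simp add: algebra_simps power2_eq_square)
  then show ?thesis by (simp add: N_def real_sqrt_mult)
qed

end

locale cvx = cset +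
  assumes cvx: "convex S" and int_ne: "interior S \<noteq> {}"
begin

lemma closed_S: "closed S" using cpt compact_imp_closed by blast

lemma closure_interior_S: "closure (interior S) = S"
  using convex_closure_interior[OF cvx int_ne] closed_S closure_closed by simp

lemma kernel:
  assumes pe: "pp e" and z: "ip S e e = 0"
  shows "N (partial i e) = 0"
proof -
  have ce: "continuous_on A e" for A using pp_continuous[OF pe] .
  have int_zero: "partial i e x = 0" if x: "x \<in> interior S" for x
  proof -
    obtain a b where ab: "box a b \<subseteq> interior S" "x \<in> box a b"
      using open_contains_box[OF open_interior x] by metis
    have bne: "box a b \<noteq> {}" using ab by auto
    have cb: "cbox a b \<subseteq> S"
      using closure_mono[OF ab(1)] closure_box[OF bne] closure_interior_S by simp
    have "integral (cbox a b) (\<lambda>x. e x * e x) \<le> integral S (\<lambda>x. e x * e x)"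
      by (rule integral_subset_le[OF cb])
         (auto intro!: integrable_continuous integrable_prod continuous_intros ce)
    then have le: "integral (cbox a b) (\<lambda>x. e x * e x) \<le> 0" using z by (simp add: ip_def)
    have "0 \<le> integral (cbox a b) (\<lambda>x. e x * e x)"
      by (rule integral_nonneg) (auto intro!: integrable_continuous continuous_intros ce)
    with le have "integral (cbox a b) (\<lambda>x. e x * e x) = 0" by simp
    then have "\<forall>y\<in>cbox a b. e y * e y = 0"
      by (subst (asm) integral_cbox_eq_0_iff) (auto intro!: continuous_intros ce bne)
    then have ez: "\<And>y. y \<in> box a b \<Longrightarrow> e y = 0" using box_subset_cbox by fastforce
    obtain r where r: "r > 0" "ball x r \<subseteq> box a b"
      using open_box ab(2) openE by metis
    show ?thesis by (rule partial_locally_zero[OF r(1)]) (use r ez in auto)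
  qed
  have "partial i e x = 0" if "x \<in> S" for x
  proof (rule continuous_constant_on_closure[of "interior S"])
    show "continuous_on (closure (interior S)) (partial i e)"
      by (rule pp_continuous[OF pp_partial'[OF pe]])
  qed (use int_zero closure_interior_S that in auto)
  then have "ip S (partial i e) (partial i e) = 0"
    unfolding ip_def by (simp add: integral_cong[of S _ "\<lambda>_. 0"])
  then show ?thesis by (simp add: N_def)
qed

lemma N_partial_lin:
  assumes "pp u" "pp e"
  shows "N (partial i (\<lambda>x. u x + t * e x)) \<le> N (partial i u) + \<bar>t\<bar> * N (partial i e)"
proof -
  have "partial i (\<lambda>x. u x + t * e x) = (\<lambda>x. partial i u x + t * partial i e x)"
    using assms by (auto simp: fun_eq_iff partial_add partial_cmult pp_differentiable
        intro!: differentiable_mult)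
  then show ?thesis
    using N_add[of "partial i u" "partial i e" t] assms
    by (simp add: pp_continuous pp_partial')
qed

lemma N_eq_sqrt: "continuous_on S f \<Longrightarrow> N f = sqrt ((N f)^2)"
  using N_nonneg by simp

lemma findim:
  fixes n :: nat
  shows "\<forall>b. (\<forall>j<n. pp (b j)) \<longrightarrow> (\<exists>C\<ge>0. \<forall>c. N (partial i (\<lambda>x. \<Sum>j<n. c j * b j x))
       \<le> C * N (\<lambda>x. \<Sum>j<n. c j * b j x))"
proof (induction n)
  case 0
  show ?case by (auto intro!: exI[of _ 0] simp: partial_const_fun N_def ip_def)
next
  case (Suc n)
  show ?case
  proof (intro allI impI)
    fix b :: "nat \<Rightarrow> real^'a \<Rightarrow> real"
    assume pb: "\<forall>j<Suc n. pp (b j)"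
    define e where "e = b n"
    have pe: "pp e" using pb by (simp add: e_def)
    have ce: "continuous_on S e" using pp_continuous[OF pe] .
    have fsplit: "(\<lambda>x. \<Sum>j<Suc n. c j * b j x) = (\<lambda>x. (\<Sum>j<n. c j * b j x) + c n * e x)" for c
      by (simp add: e_def)
    show "\<exists>C\<ge>0. \<forall>c. N (partial i (\<lambda>x. \<Sum>j<Suc n. c j * b j x))
       \<le> C * N (\<lambda>x. \<Sum>j<Suc n. c j * b j x)"
    proof (cases "ip S e e = 0")
      case True
      obtain C where C: "C \<ge> 0" "\<And>c. N (partial i (\<lambda>x. \<Sum>j<n. c j * b j x))
           \<le> C * N (\<lambda>x. \<Sum>j<n. c j * b j x)"
      proof -
        have "\<forall>j<n. pp (b j)" using pb by simp
        from mp[OF spec[OF Suc.IH, of b] this] show ?thesis using that by blast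
      qed
      have Ne0: "N e = 0" using True by (simp add: N_def)
      have Npe: "N (partial i e) = 0" by (rule kernel[OF pe True])
      show ?thesis
      proof (intro exI[of _ C] conjI allI)
        fix c
        define u where "u = (\<lambda>x. \<Sum>j<n. c j * b j x)"
        have pu: "pp u" unfolding u_def using pb by (auto intro!: pp_sum pp_mult pp_const)
        have cu: "continuous_on S u" using pp_continuous[OF pu] .
        have "N (partial i (\<lambda>x. u x + c n * e x)) \<le> N (partial i u) + \<bar>c n\<bar> * N (partial i e)"
          by (rule N_partial_lin[OF pu pe])
        also have "\<dots> = N (partial i u)" using Npe by simp
        also have "\<dots> \<le> C * N u" using C(2) by (simp add: u_def)
        also have "N u = N (\<lambda>x. u x + c n * e x)"
        proof -
          have "\<bar>ip S u e\<bar> \<le> N u * N e" by (rule ip_le_N[OF cu ce])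
          then have "ip S u e = 0" using Ne0 by simp
          then have "(N (\<lambda>x. u x + c n * e x))^2 = (N u)^2"
            using ip_expand[OF cu ce, of "c n"] True
            by (simp add: N_sq cu ce continuous_intros)
          then show ?thesis using power2_eq_iff_nonneg[OF N_nonneg N_nonneg] by simp
        qed
        finally show "N (partial i (\<lambda>x. \<Sum>j<Suc n. c j * b j x)) \<le> C * N (\<lambda>x. \<Sum>j<Suc n. c j * b j x)"
          unfolding fsplit u_def by simp
      qed (rule C(1))
    next
      case False
      then have epos: "ip S e e > 0" using ip_nonneg[OF ce] by simp
      define \<beta> where "\<beta> j = ip S (b j) e / ip S e e" for j
      define b' where "b' j = (\<lambda>x. b j x - \<beta> j * e x)" for j
      have pb': "\<forall>j<n. pp (b' j)" using pb pe unfolding b'_def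
        by (auto intro!: pp_diff pp_mult pp_const)
      obtain C where C: "C \<ge> 0" "\<And>c. N (partial i (\<lambda>x. \<Sum>j<n. c j * b' j x))
           \<le> C * N (\<lambda>x. \<Sum>j<n. c j * b' j x)"
        using mp[OF spec[OF Suc.IH, of b'] pb'] by blast
      have ob': "ip S (b' j) e = 0" if "j < n" for j
      proof -
        have cb: "continuous_on S (b j)" using pb that by (auto intro: pp_continuous)
        have "ip S (b' j) e = ip S (\<lambda>x. b j x + (- \<beta> j) * e x) e"
          by (simp add: b'_def)
        also have "\<dots> = ip S (b j) e + ip S (\<lambda>x. (- \<beta> j) * e x) e"
          by (rule ip_add_left) (auto intro!: continuous_intros cb ce)
        also have "\<dots> = ip S (b j) e + (- \<beta> j) * ip S e e" by (simp only: ip_cmult_left)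
        also have "\<dots> = 0" using epos by (simp add: \<beta>_def)
        finally show ?thesis .
      qed
      define Ne where "Ne = N e"
      have Nepos: "Ne > 0" using epos by (simp add: Ne_def N_def)
      define K where "K = max C (N (partial i e) / Ne)"
      have K0: "K \<ge> 0" using C(1) by (simp add: K_def)
      show ?thesis
      proof (intro exI[of _ "sqrt 2 * K"] conjI allI)
        show "0 \<le> sqrt 2 * K" using K0 by simp
        fix c
        define u where "u = (\<lambda>x. \<Sum>j<n. c j * b' j x)"
        define \<tau> where "\<tau> = c n + (\<Sum>j<n. c j * \<beta> j)"
        have pu: "pp u" unfolding u_def using pb' by (auto intro!: pp_sum pp_mult pp_const)
        have cu: "continuous_on S u" using pp_continuous[OF pu] .
        have feq: "(\<lambda>x. \<Sum>j<Suc n. c j * b j x) = (\<lambda>x. u x + \<tau> * e x)"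
          unfolding fsplit u_def \<tau>_def b'_def
          by (auto simp: fun_eq_iff algebra_simps sum_subtractf sum_distrib_right sum_distrib_left)
        have ue: "ip S u e = 0"
        proof -
          have "ip S u e = (\<Sum>j<n. ip S (\<lambda>x. c j * b' j x) e)"
            unfolding u_def
            by (rule ip_sum_left) (use pb' in \<open>auto intro!: pp_continuous pp_mult pp_const ce\<close>)
          also have "\<dots> = 0" using ob' by (simp add: ip_cmult_left)
          finally show ?thesis .
        qed
        have Nf: "(N (\<lambda>x. u x + \<tau> * e x))^2 = (N u)^2 + (\<bar>\<tau>\<bar> * Ne)^2"
          using ip_expand[OF cu ce, of \<tau>] ue
          by (simp add: N_sq cu ce continuous_intros Ne_def power_mult_distrib)
        have "N (partial i (\<lambda>x. u x + \<tau> * e x)) \<le> N (partial i u) + \<bar>\<tau>\<bar> * N (partial i e)"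
          by (rule N_partial_lin[OF pu pe])
        also have "\<dots> \<le> K * N u + K * (\<bar>\<tau>\<bar> * Ne)"
        proof (rule add_mono)
          show "N (partial i u) \<le> K * N u"
            using C(2)[of c] mult_right_mono[of C K "N u"] N_nonneg[of u]
            by (simp add: u_def K_def)
          have "N (partial i e) = (N (partial i e) / Ne) * Ne" using Nepos by simp
          also have "\<dots> \<le> K * Ne" using Nepos by (intro mult_right_mono) (auto simp: K_def)
          finally have "N (partial i e) \<le> K * Ne" .
          from mult_left_mono[OF this abs_ge_zero[of \<tau>]]
          show "\<bar>\<tau>\<bar> * N (partial i e) \<le> K * (\<bar>\<tau>\<bar> * Ne)" by (simp add: algebra_simps)
        qed
        also have "\<dots> = K * (N u + \<bar>\<tau>\<bar> * Ne)" by (simp add: algebra_simps)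
        also have "\<dots> \<le> K * (sqrt 2 * sqrt ((N u)^2 + (\<bar>\<tau>\<bar> * Ne)^2))"
        proof (rule mult_left_mono[OF _ K0])
          have a: "0 \<le> N u" "0 \<le> \<bar>\<tau>\<bar> * Ne" using N_nonneg Nepos by auto
          show "N u + \<bar>\<tau>\<bar> * Ne \<le> sqrt 2 * sqrt ((N u)^2 + (\<bar>\<tau>\<bar> * Ne)^2)"
          proof (rule power2_le_imp_le)
            have "(N u + \<bar>\<tau>\<bar> * Ne)^2 \<le> 2 * ((N u)^2 + (\<bar>\<tau>\<bar> * Ne)^2)"
              using sum_squares_ge_zero[of "N u - \<bar>\<tau>\<bar> * Ne" 0]
              by (simp add: power2_eq_square algebra_simps)
            then show "(N u + \<bar>\<tau>\<bar> * Ne)^2 \<le> (sqrt 2 * sqrt ((N u)^2 + (\<bar>\<tau>\<bar> * Ne)^2))^2"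
              by (simp add: power_mult_distrib)
          qed simp
        qed
        also have "\<dots> = sqrt 2 * K * N (\<lambda>x. u x + \<tau> * e x)"
        proof -
          have "sqrt ((N u)^2 + (\<bar>\<tau>\<bar> * Ne)^2) = N (\<lambda>x. u x + \<tau> * e x)"
            unfolding Nf[symmetric] using N_nonneg[of "\<lambda>x. u x + \<tau> * e x"] by simp
          then show ?thesis by simp
        qed
        finally show "N (partial i (\<lambda>x. \<Sum>j<Suc n. c j * b j x)) \<le> sqrt 2 * K * N (\<lambda>x. \<Sum>j<Suc n. c j * b j x)"
          unfolding feq .
      qed
    qed
  qed
qed

end

lemma Basis_cart: "(Basis :: (real^'n::finite) set) = range (\<lambda>i. axis i 1)"
  by (auto simp: Basis_vec_def)

lemma sum_Basis_cart: "(\<Sum>b\<in>(Basis :: (real^'n::finite) set). x \<bullet> b) = (\<Sum>i\<in>UNIV. x $ i)"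
proof -
  have "inj (\<lambda>i::'n. axis i (1::real))" by (auto simp: inj_def axis_eq_axis)
  then show ?thesis unfolding Basis_cart
    by (simp add: sum.reindex cart_eq_inner_axis)
qed

lemma unit_simplex_hull: "(unit_simplex :: (real^'n::finite) set) = convex hull (insert 0 Basis)"
  unfolding std_simplex unit_simplex_def sum_Basis_cart
  by (auto simp: Basis_cart cart_eq_inner_axis)

lemma unit_simplex_cvx: "cvx (unit_simplex :: (real^'n::finite) set)"
proof
  show "compact (unit_simplex :: (real^'n::finite) set)"
    unfolding unit_simplex_hull by (rule finite_imp_compact_convex_hull) simp
  show "convex (unit_simplex :: (real^'n::finite) set)"
    unfolding unit_simplex_hull by simp
  show "interior (unit_simplex :: (real^'n::finite) set) \<noteq> {}"
    unfolding unit_simplex_hull using interior_std_simplex_nonempty by blast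
qed

interpretation us: cvx "unit_simplex :: (real^'n::finite) set"
  by (rule unit_simplex_cvx)

lemma L2_one_pos: "L2norm (unit_simplex :: (real^'n::finite) set) (\<lambda>x. 1) > 0"
proof -
  obtain x where x: "x \<in> interior (unit_simplex :: (real^'n::finite) set)"
    using us.int_ne by blast
  obtain a b where ab: "box a b \<subseteq> interior unit_simplex" "x \<in> box a b" "\<forall>i\<in>Basis. a \<bullet> i < b \<bullet> i"
    using open_contains_box[OF open_interior x] by metis
  have bne: "box a b \<noteq> {}" using ab by auto
  have ci: "closure (interior (unit_simplex::(real^'n) set)) = unit_simplex"
    by (rule us.closure_interior_S)
  have cb: "cbox a b \<subseteq> unit_simplex"
    using closure_mono[OF ab(1)] closure_box[OF bne] ci by simp
  have "0 < Henstock_Kurzweil_Integration.content (cbox a b)" by (rule content_pos_lt[OF ab(3)])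
  also have "Henstock_Kurzweil_Integration.content (cbox a b) = integral (cbox a b) (\<lambda>x. 1::real)" by simp
  also have "\<dots> \<le> integral (unit_simplex::(real^'n) set) (\<lambda>x. 1::real)"
    by (rule integral_subset_le[OF cb]) (auto intro!: int_cont us.cpt)
  finally show ?thesis by (simp add: L2norm_def)
qed

lemma Cqd_exists_i:
  "\<exists>C\<ge>0. \<forall>f::real^'n::finite \<Rightarrow> real. poly_fun q f \<longrightarrow>
     L2norm unit_simplex (partial i f) \<le> C * L2norm unit_simplex f"
proof -
  obtain xs where xs: "set xs = (multi_indices q :: ('n \<Rightarrow> nat) set)" "distinct xs"
    using finite_distinct_list[OF finite_multi_indices] by blast
  define b where "b j = mono_fun (xs ! j)" for j
  have pb: "\<forall>j<length xs. pp (b j)"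
    by (auto simp: b_def pp_def intro!: exI[of _ q] poly_fun_term[of _ q 1, simplified]
        simp flip: xs(1))
  obtain C where C: "C \<ge> 0" "\<And>c. us.N (partial i (\<lambda>x. \<Sum>j<length xs. c j * b j x))
     \<le> C * us.N (\<lambda>x. \<Sum>j<length xs. c j * b j x)"
    using mp[OF spec[OF us.findim[of "length xs" i], of b] pb] by blast
  show ?thesis
  proof (intro exI[of _ C] conjI allI impI)
    fix f :: "real^'n \<Rightarrow> real" assume "poly_fun q f"
    then obtain c where f: "f = (\<lambda>x. \<Sum>\<alpha>\<in>multi_indices q. c \<alpha> * mono_fun \<alpha> x)"
      unfolding poly_fun_alt by blast
    have "f = (\<lambda>x. \<Sum>j<length xs. c (xs ! j) * b j x)"
    proof
      fix x
      have "f x = (\<Sum>\<alpha>\<in>set xs. c \<alpha> * mono_fun \<alpha> x)" by (simp add: f xs(1))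
      also have "\<dots> = (\<Sum>j<length xs. c (xs ! j) * b j x)"
        by (simp add: sum.distinct_set_conv_list[OF xs(2)] sum_list_sum_nth atLeast0LessThan b_def)
      finally show "f x = (\<Sum>j<length xs. c (xs ! j) * b j x)" .
    qed
    then show "L2norm unit_simplex (partial i f) \<le> C * L2norm unit_simplex f"
      using C(2)[of "\<lambda>j. c (xs ! j)"] by (simp add: us.N_L2)
  qed (rule C(1))
qed

lemma Cqd_prop:
  fixes f :: "real^'n::finite \<Rightarrow> real"
  shows "Cqd TYPE('n) q \<ge> 0"
    and "poly_fun q f \<Longrightarrow> L2norm unit_simplex (partial i f) \<le> Cqd TYPE('n) q * L2norm unit_simplex f"
proof -
  define SC where "SC = {C. \<forall>(v :: real^'n \<Rightarrow> real) i. poly_fun q v \<longrightarrow>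
      L2norm unit_simplex (partial i v) \<le> C * L2norm unit_simplex v}"
  have Cq: "Cqd TYPE('n) q = Inf SC" by (simp add: Cqd_def SC_def)
  have ex: "\<forall>i. \<exists>C. 0 \<le> C \<and> (\<forall>v::real^'n \<Rightarrow> real. poly_fun q v \<longrightarrow>
      L2norm unit_simplex (partial i v) \<le> C * L2norm unit_simplex v)"
    using Cqd_exists_i[of q] by blast
  obtain Cf where Cf': "\<forall>i. 0 \<le> Cf i \<and> (\<forall>v::real^'n \<Rightarrow> real. poly_fun q v \<longrightarrow>
      L2norm unit_simplex (partial i v) \<le> Cf i * L2norm unit_simplex v)"
    using choice[OF ex] by blast
  have Cf: "\<And>i. Cf i \<ge> 0" "\<And>i (v::real^'n \<Rightarrow> real). poly_fun q v \<Longrightarrow>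
      L2norm unit_simplex (partial i v) \<le> Cf i * L2norm unit_simplex v"
    using Cf' by auto
  have "(\<Sum>i\<in>UNIV. Cf i) \<in> SC"
    unfolding SC_def
  proof (intro CollectI allI impI)
    fix v :: "real^'n \<Rightarrow> real" and i assume v: "poly_fun q v"
    have "Cf i \<le> (\<Sum>i\<in>UNIV. Cf i)" by (rule member_le_sum) (auto intro: Cf(1))
    then have "Cf i * L2norm unit_simplex v \<le> (\<Sum>i\<in>UNIV. Cf i) * L2norm unit_simplex v"
      by (rule mult_right_mono) (simp add: us.N_L2[symmetric] us.N_nonneg)
    with Cf(2)[OF v, of i] show "L2norm unit_simplex (partial i v) \<le> (\<Sum>i\<in>UNIV. Cf i) * L2norm unit_simplex v"
      by linarith
  qed
  then have ne: "SC \<noteq> {}" by blast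
  have lb: "0 \<le> C" if "C \<in> SC" for C
  proof -
    obtain i :: 'n where True by blast
    have "L2norm unit_simplex (partial i (\<lambda>x::real^'n. 1)) \<le> C * L2norm unit_simplex (\<lambda>x::real^'n. 1)"
      using that poly_fun_const[of q 1] unfolding SC_def by blast
    then have "0 \<le> C * L2norm unit_simplex (\<lambda>x::real^'n. 1)"
      by (simp add: partial_const_fun L2norm_def)
    moreover have p: "L2norm (unit_simplex::(real^'n) set) (\<lambda>x. 1) > 0" by (rule L2_one_pos)
    ultimately show ?thesis by (auto simp: zero_le_mult_iff)
  qed
  show "Cqd TYPE('n) q \<ge> 0" unfolding Cq by (rule cInf_greatest[OF ne lb])
  assume f: "poly_fun q f"
  show "L2norm unit_simplex (partial i f) \<le> Cqd TYPE('n) q * L2norm unit_simplex f"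
  proof (cases "L2norm unit_simplex f = 0")
    case True
    obtain C where "C \<in> SC" using ne by blast
    then show ?thesis using f True unfolding SC_def by force
  next
    case False
    then have pos: "L2norm unit_simplex f > 0" using us.N_nonneg[of f] by (simp add: us.N_L2)
    have "L2norm unit_simplex (partial i f) / L2norm unit_simplex f \<le> Inf SC"
    proof (rule cInf_greatest[OF ne])
      fix C assume "C \<in> SC"
      then have "L2norm unit_simplex (partial i f) \<le> C * L2norm unit_simplex f"
        using f unfolding SC_def by blast
      then show "L2norm unit_simplex (partial i f) / L2norm unit_simplex f \<le> C"
        using pos by (simp add: divide_le_eq)
    qed
    then show ?thesis using pos unfolding Cq by (simp add: divide_le_eq mult.commute)
  qed
qed

typedef 'a wo = "UNIV :: 'a set" by simp

instance wo :: (finite) finite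
proof
  have "(UNIV :: 'a wo set) = Abs_wo ` UNIV"
    by (metis Rep_wo_inverse UNIV_I image_eqI subsetI subset_antisym)
  moreover have "finite (range (Abs_wo :: 'a \<Rightarrow> 'a wo))" by (rule finite_imageI) simp
  ultimately show "finite (UNIV :: 'a wo set)" by simp
qed

instantiation wo :: (finite) linorder
begin
definition less_eq_wo :: "'a wo \<Rightarrow> 'a wo \<Rightarrow> bool" where
  "less_eq_wo x y \<longleftrightarrow> to_nat (Rep_wo x) \<le> to_nat (Rep_wo y)"
definition less_wo :: "'a wo \<Rightarrow> 'a wo \<Rightarrow> bool" where
  "less_wo x y \<longleftrightarrow> to_nat (Rep_wo x) < to_nat (Rep_wo y)"
instance
proof
  fix x y z :: "'a wo"
  show "(x < y) = (x \<le> y \<and> \<not> y \<le> x)" by (auto simp: less_eq_wo_def less_wo_def)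
  show "x \<le> x" by (simp add: less_eq_wo_def)
  show "x \<le> y \<Longrightarrow> y \<le> z \<Longrightarrow> x \<le> z" by (simp add: less_eq_wo_def)
  show "x \<le> y \<Longrightarrow> y \<le> x \<Longrightarrow> x = y"
    by (simp add: less_eq_wo_def Rep_wo_inject[symmetric])
  show "x \<le> y \<or> y \<le> x" by (auto simp: less_eq_wo_def)
qed
end

instance wo :: (finite) wellorder
proof
  fix P :: "'a wo \<Rightarrow> bool" and a :: "'a wo"
  assume step: "\<And>x. (\<And>y. y < x \<Longrightarrow> P y) \<Longrightarrow> P x"
  show "P a"
  proof (induction "to_nat (Rep_wo a)" arbitrary: a rule: less_induct)
    case less
    show ?case by (rule step) (use less in \<open>auto simp: less_wo_def\<close>)
  qed
qed

definition Phi :: "real^'n::finite \<Rightarrow> real^('n wo)" where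
  "Phi x = (\<chi> j. x $ Rep_wo j)"
definition Psi :: "real^('n::finite wo) \<Rightarrow> real^'n" where
  "Psi y = (\<chi> i. y $ Abs_wo i)"

lemma Phi_Psi [simp]: "Phi (Psi y) = y"
  by (simp add: Phi_def Psi_def Rep_wo_inverse vec_eq_iff)
lemma Psi_Phi [simp]: "Psi (Phi x) = x"
  by (simp add: Phi_def Psi_def Abs_wo_inverse vec_eq_iff)

lemma linear_Phi: "linear Phi"
  by (auto simp: linear_iff Phi_def vec_eq_iff)
lemma linear_Psi: "linear Psi"
  by (auto simp: linear_iff Psi_def vec_eq_iff)

lemma Psi_cbox: "Psi ` cbox u v = cbox (Psi u) (Psi v)"
proof
  show "Psi ` cbox u v \<subseteq> cbox (Psi u) (Psi v)"
    by (auto simp: mem_box_cart Psi_def)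
  show "cbox (Psi u) (Psi v) \<subseteq> Psi ` cbox u v"
  proof
    fix x assume x: "x \<in> cbox (Psi u) (Psi v)"
    have "Phi x \<in> cbox u v"
      unfolding mem_box_cart
    proof
      fix j :: "'a wo"
      from x have "u $ Abs_wo (Rep_wo j) \<le> x $ Rep_wo j \<and> x $ Rep_wo j \<le> v $ Abs_wo (Rep_wo j)"
        by (auto simp: mem_box_cart Psi_def)
      then show "u $ j \<le> Phi x $ j \<and> Phi x $ j \<le> v $ j"
        by (simp add: Phi_def Rep_wo_inverse)
    qed
    then show "x \<in> Psi ` cbox u v" by (metis Psi_Phi image_eqI)
  qed
qed

lemma Phi_cbox: "Phi ` cbox u v = cbox (Phi u) (Phi v)"
proof -
  have "Phi ` cbox u v = Phi ` Psi ` cbox (Phi u) (Phi v)"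
    by (simp add: Psi_cbox)
  also have "\<dots> = cbox (Phi u) (Phi v)" by (simp add: image_image)
  finally show ?thesis .
qed

lemma content_Psi: "Henstock_Kurzweil_Integration.content (Psi ` cbox u v) = 1 * Henstock_Kurzweil_Integration.content (cbox u v)"
proof -
  have e: "cbox (Psi u) (Psi v) = {} \<longleftrightarrow> cbox u v = {}"
    by (metis Psi_cbox image_is_empty)
  have "(\<Prod>i\<in>UNIV. Psi v $ i - Psi u $ i) = (\<Prod>i\<in>UNIV. v $ Abs_wo i - u $ Abs_wo i)"
    by (simp add: Psi_def)
  also have "\<dots> = (\<Prod>j\<in>UNIV. v $ j - u $ j)"
    by (rule prod.reindex_bij_witness[where i=Rep_wo and j=Abs_wo])
       (auto simp: Rep_wo_inverse Abs_wo_inverse)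
  finally have "(\<Prod>i\<in>UNIV. Psi v $ i - Psi u $ i) = (\<Prod>j\<in>UNIV. v $ j - u $ j)" .
  then show ?thesis
    unfolding Psi_cbox content_cbox_if_cart e by simp
qed

lemma continuous_Psi: "continuous (at x) Psi"
  using linear_Psi linear_conv_bounded_linear linear_continuous_at by blast

lemma has_integral_Phi:
  fixes f :: "real^'n::finite \<Rightarrow> real"
  assumes "(f has_integral I) A" "bounded A"
  shows "((\<lambda>y. f (Psi y)) has_integral I) (Phi ` A)"
proof -
  obtain a where a: "A \<subseteq> cbox (-a) a" using bounded_subset_cbox_symmetric[OF assms(2)] by blast
  define fA where "fA x = (if x \<in> A then f x else 0)" for x
  have "(fA has_integral I) (cbox (-a) a)"
    unfolding fA_def by (subst has_integral_restrict[OF a]) (rule assms(1))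
  then have "((\<lambda>y. fA (Psi y)) has_integral (1 / 1) *\<^sub>R I) (Phi ` cbox (-a) a)"
    by (intro has_integral_twiddle[where r=1])
       (auto simp: continuous_Psi Psi_cbox Phi_cbox content_Psi[unfolded Psi_cbox])
  moreover have "(\<lambda>y. fA (Psi y)) = (\<lambda>y. if y \<in> Phi ` A then f (Psi y) else 0)"
    by (auto simp: fA_def fun_eq_iff image_iff)
  moreover have "Phi ` A \<subseteq> Phi ` cbox (-a) a" using a by auto
  ultimately show ?thesis by simp
qed

lemma int_cont_gen:
  fixes f :: "'a::euclidean_space \<Rightarrow> 'b::euclidean_space"
  assumes "compact S" "continuous_on S f" shows "f integrable_on S"
  using borel_integrable_compact[OF assms] set_borel_integral_eq_integral(1)
  unfolding set_integrable_def by blast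

lemma integral_Phi:
  fixes f :: "real^'n::finite \<Rightarrow> real"
  assumes "compact A" "continuous_on A f"
  shows "integral A f = integral (Phi ` A) (\<lambda>y. f (Psi y))"
proof -
  have "(f has_integral integral A f) A" using int_cont[OF assms] by (rule integrable_integral)
  from has_integral_Phi[OF this compact_imp_bounded[OF assms(1)]] show ?thesis
    by (simp add: integral_unique)
qed

lemma cov_wo:
  fixes L :: "real^'m::{finite,wellorder} \<Rightarrow> real^'m::_" and k :: "real^'m::_ \<Rightarrow> real"
  assumes L: "linear L" "inj L" and T: "compact T"
    and k: "continuous_on ((\<lambda>y. c + L y) ` T) k"
  shows "integral ((\<lambda>y. c + L y) ` T) k = \<bar>det (matrix L)\<bar> * integral T (\<lambda>y. k (c + L y))"
proof -
  define g where "g y = c + L y" for y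
  obtain Li where Li: "linear Li" "Li \<circ> L = id" using linear_injective_left_inverse[OF L] by blast
  define h where "h z = Li (z - c)" for z
  define F :: "real^'m::_ \<Rightarrow> real^1" where "F x = vec (k x)" for x
  have cg: "continuous_on UNIV g" unfolding g_def
    using L(1) linear_continuous_on linear_conv_bounded_linear
    by (auto intro!: continuous_intros)
  have cgT: "compact (g ` T)" by (rule compact_continuous_image[OF continuous_on_subset[OF cg] T]) simp
  have kg: "continuous_on (g ` T) k" using k by (simp add: g_def[abs_def])
  have cF: "continuous_on (g ` T) F" unfolding F_def vec_def
    by (intro continuous_on_vec_lambda kg)
  have Fi: "F integrable_on (g ` T)" by (rule int_cont_gen[OF cgT cF])
  have absk: "(\<lambda>x. \<bar>k x\<bar>) integrable_on (g ` T)"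
    by (rule int_cont[OF cgT]) (intro continuous_intros kg)
  have Fa: "F absolutely_integrable_on (g ` T)"
    by (rule absolutely_integrable_integrable_bound[OF _ Fi absk]) (simp add: F_def norm_real)
  have cv: "(\<lambda>x. \<bar>det (matrix L)\<bar> *\<^sub>R F (g x)) absolutely_integrable_on T \<and>
      integral T (\<lambda>x. \<bar>det (matrix L)\<bar> *\<^sub>R F (g x)) = integral (g ` T) F"
  proof (rule has_absolute_integral_change_of_variables_invertible[where g'="\<lambda>_. L" and h=h, THEN iffD2])
    show "(g has_derivative L) (at x within T)" for x
    proof -
      have "((\<lambda>y. c + L y) has_derivative (\<lambda>h. 0 + L h)) (at x)"
        by (rule has_derivative_add[OF has_derivative_const linear_imp_has_derivative[OF L(1)]])
      then have "(g has_derivative (\<lambda>h. 0 + L h)) (at x)" by (simp add: g_def[abs_def])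
      then show ?thesis by (simp add: has_derivative_at_withinI)
    qed
    show "h (g x) = x" for x
    proof -
      have "h (g x) = Li (L x)" by (simp add: h_def g_def)
      also have "\<dots> = x" using Li(2) by (metis comp_apply id_apply)
      finally show ?thesis .
    qed
    show "continuous_on (g ` T) h"
    proof -
      have "bounded_linear Li" using Li(1) linear_conv_bounded_linear by blast
      then have cL: "continuous_on UNIV Li" by (rule linear_continuous_on)
      have "continuous_on UNIV (Li \<circ> (\<lambda>z. z - c))"
        by (rule continuous_on_compose) (auto intro: continuous_on_subset[OF cL] continuous_intros)
      then have "continuous_on UNIV h" by (simp add: h_def[abs_def] o_def)
      then show ?thesis by (rule continuous_on_subset) simp
    qed
    show "F absolutely_integrable_on g ` T \<and> integral (g ` T) F = integral (g ` T) F"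
      using Fa by blast
  qed
  have "integral (g ` T) k = integral (g ` T) F $ 1"
    by (subst integral_on_1_eq) (simp add: F_def)
  also have "\<dots> = integral T (\<lambda>x. \<bar>det (matrix L)\<bar> *\<^sub>R F (g x)) $ 1" using cv by simp
  also have "\<dots> = integral T (\<lambda>x. \<bar>det (matrix L)\<bar> * k (g x))"
    by (subst integral_on_1_eq) (simp add: F_def)
  also have "\<dots> = \<bar>det (matrix L)\<bar> * integral T (\<lambda>x. k (g x))" by simp
  finally show ?thesis by (simp add: g_def[abs_def])
qed

lemma cov:
  fixes L :: "real^'n::finite \<Rightarrow> real^'n"
  assumes L: "linear L" "inj L"
  shows "\<exists>lam>0. \<forall>S (k::real^'n \<Rightarrow> real). compact S \<longrightarrow> continuous_on ((\<lambda>x. a + L x) ` S) k \<longrightarrow>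
     integral ((\<lambda>x. a + L x) ` S) k = lam * integral S (\<lambda>x. k (a + L x))"
proof -
  define L' where "L' y = Phi (L (Psi y))" for y
  have lL': "linear L'" unfolding L'_def[abs_def]
    using linear_compose[OF linear_compose[OF linear_Psi L(1)] linear_Phi] by (simp add: o_def)
  have iL': "inj L'"
  proof (rule injI)
    fix x y assume "L' x = L' y"
    then have "Psi (Phi (L (Psi x))) = Psi (Phi (L (Psi y)))" by (simp add: L'_def)
    then have "Psi x = Psi y" using L(2) by (simp add: inj_eq)
    then have "Phi (Psi x) = Phi (Psi y)" by simp
    then show "x = y" by simp
  qed
  define lam where "lam = \<bar>det (matrix L')\<bar>"
  have lpos: "lam > 0" using det_nz_iff_inj[OF lL'] iL' by (simp add: lam_def)
  have cPsi: "continuous_on A Psi" for A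
    using linear_Psi linear_conv_bounded_linear linear_continuous_on continuous_on_subset by blast
  have cPhi: "continuous_on A Phi" for A
    using linear_Phi linear_conv_bounded_linear linear_continuous_on continuous_on_subset by blast
  have cLc: "continuous_on A L" for A
    using L(1) linear_conv_bounded_linear linear_continuous_on continuous_on_subset by blast
  have main: "\<forall>S (k::real^'n \<Rightarrow> real). compact S \<longrightarrow> continuous_on ((\<lambda>x. a + L x) ` S) k \<longrightarrow>
     integral ((\<lambda>x. a + L x) ` S) k = lam * integral S (\<lambda>x. k (a + L x))"
  proof (intro allI impI)
    fix S :: "(real^'n) set" and k :: "real^'n \<Rightarrow> real" assume S: "compact S" and k: "continuous_on ((\<lambda>x. a + L x) ` S) k"
    define G where "G x = a + L x" for x
    define g where "g y = Phi a + L' y" for y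
    have cG: "continuous_on A G" for A unfolding G_def[abs_def] by (intro continuous_intros cLc)
    have GS: "compact (G ` S)" by (rule compact_continuous_image[OF cG S])
    have kG: "continuous_on (G ` S) k" using k by (simp add: G_def[abs_def])
    have PhiG: "Phi (G x) = g (Phi x)" for x
      unfolding G_def g_def L'_def using linear_add[OF linear_Phi] by simp
    have PsiG: "Psi (g y) = G (Psi y)" for y
      by (metis PhiG Phi_Psi Psi_Phi)
    have img: "Phi ` G ` S = g ` Phi ` S" by (auto simp: PhiG image_iff image_image)
    have PS: "compact (Phi ` S)" by (rule compact_continuous_image[OF cPhi S])
    have kPsi: "continuous_on (g ` Phi ` S) (\<lambda>y. k (Psi y))"
    proof (rule continuous_on_compose2[OF kG cPsi])
      show "Psi ` (g ` Phi ` S) \<subseteq> G ` S" using PsiG by auto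
    qed
    have "integral (G ` S) k = integral (Phi ` G ` S) (\<lambda>y. k (Psi y))"
      by (rule integral_Phi[OF GS kG])
    also have "\<dots> = integral ((\<lambda>y. Phi a + L' y) ` Phi ` S) (\<lambda>y. k (Psi y))"
      unfolding img g_def ..
    also have "\<dots> = lam * integral (Phi ` S) (\<lambda>y. k (Psi (Phi a + L' y)))"
      unfolding lam_def by (rule cov_wo[OF lL' iL' PS]) (use kPsi in \<open>simp add: g_def[abs_def]\<close>)
    also have "integral (Phi ` S) (\<lambda>y. k (Psi (Phi a + L' y))) = integral S (\<lambda>x. k (G x))"
    proof -
      have cKG: "continuous_on S (\<lambda>x. k (G x))"
        by (rule continuous_on_compose2[OF kG cG]) auto
      have "integral S (\<lambda>x. k (G x)) = integral (Phi ` S) (\<lambda>y. k (G (Psi y)))"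
        by (rule integral_Phi[OF S cKG])
      also have "\<dots> = integral (Phi ` S) (\<lambda>y. k (Psi (Phi a + L' y)))"
        using PsiG by (simp add: g_def)
      finally show ?thesis by simp
    qed
    finally show "integral ((\<lambda>x. a + L x) ` S) k = lam * integral S (\<lambda>x. k (a + L x))"
      by (simp add: G_def[abs_def])
  qed
  show ?thesis using main lpos by blast
qed

lemma simplex_param:
  fixes K :: "(real^'n::finite) set"
  assumes "(int CARD('n)) simplex K"
  obtains a0 and L :: "real^'n \<Rightarrow> real^'n" where "linear L" "inj L" "K = (\<lambda>x. a0 + L x) ` unit_simplex"
proof -
  obtain C where C: "\<not> affine_dependent C" "int (card C) = int CARD('n) + 1" "K = convex hull C"
    using assms unfolding simplex_def by blast
  have cC: "card C = CARD('n) + 1" using C(2) by simp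
  then have fC: "finite C" using card.infinite by fastforce
  obtain a0 where a0: "a0 \<in> C" using cC by fastforce
  define C' where "C' = C - {a0}"
  have cC': "card C' = CARD('n)" using cC a0 fC by (simp add: C'_def)
  have CC': "C = insert a0 C'" "a0 \<notin> C'" using a0 by (auto simp: C'_def)
  obtain \<phi> where \<phi>: "bij_betw \<phi> (UNIV :: 'n set) C'"
    using finite_same_card_bij[of "UNIV :: 'n set" C'] fC cC' by (auto simp: C'_def)
  define L where "L x = (\<Sum>i\<in>UNIV. x $ i *\<^sub>R (\<phi> i - a0))" for x :: "real^'n"
  have lin: "linear L"
    unfolding L_def[abs_def]
    by (auto simp: linear_iff sum.distrib scaleR_add_left scaleR_sum_right)
  have Lax: "L (axis i 1) = \<phi> i - a0" for i
    unfolding L_def by (simp add: axis_def if_distrib[of "\<lambda>t. t *\<^sub>R _"] cong: if_cong)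
  have ind: "\<not> dependent ((+) (- a0) ` C')"
    using C(1) affine_dependent_iff_dependent[OF CC'(2)] CC'(1) by simp
  define \<psi> where "\<psi> i = - a0 + \<phi> i" for i
  have inj\<psi>: "inj \<psi>" using \<phi> unfolding \<psi>_def bij_betw_def inj_def by auto
  have V: "(+) (- a0) ` C' = range \<psi>" using \<phi> unfolding \<psi>_def bij_betw_def by auto
  have inj: "inj L"
  proof -
    have "z = 0" if z: "L z = 0" for z
    proof (rule ccontr)
      assume "z \<noteq> 0"
      then obtain i where i: "z $ i \<noteq> 0" by (auto simp: vec_eq_iff)
      define u where "u v = z $ inv \<psi> v" for v
      have "(\<Sum>v\<in>range \<psi>. u v *\<^sub>R v) = (\<Sum>j\<in>UNIV. u (\<psi> j) *\<^sub>R \<psi> j)"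
        by (rule sum.reindex[OF inj\<psi>, unfolded o_def])
      also have "\<dots> = (\<Sum>j\<in>UNIV. z $ j *\<^sub>R \<psi> j)" by (simp add: u_def inv_f_f[OF inj\<psi>])
      also have "\<dots> = L z" unfolding L_def \<psi>_def by simp
      finally have "(\<Sum>v\<in>range \<psi>. u v *\<^sub>R v) = 0" using z by simp
      moreover have "u (\<psi> i) \<noteq> 0" using i by (simp add: u_def inv_f_f[OF inj\<psi>])
      ultimately have "dependent (range \<psi>)"
        unfolding dependent_explicit by (intro exI[of _ "range \<psi>"] exI[of _ u]) auto
      with ind V show False by simp
    qed
    then show ?thesis using lin by (simp add: linear_injective_0)
  qed
  have "(\<lambda>x. a0 + L x) ` unit_simplex = (+) a0 ` (L ` (convex hull (insert 0 Basis)))"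
    unfolding unit_simplex_hull by (simp add: image_image)
  also have "\<dots> = convex hull ((+) a0 ` L ` insert 0 Basis)"
    by (simp only: convex_hull_linear_image[OF lin] convex_hull_translation)
  also have "(+) a0 ` L ` insert 0 Basis = C"
  proof -
    have "L 0 = 0" using lin by (simp add: linear_0)
    moreover have "L ` Basis = (\<lambda>i. \<phi> i - a0) ` UNIV" by (auto simp: Basis_cart Lax image_image)
    ultimately have "(+) a0 ` L ` insert 0 Basis = insert a0 (range \<phi>)" by (auto simp: image_image)
    also have "range \<phi> = C'" using \<phi> by (simp add: bij_betw_def)
    finally show ?thesis using CC' by simp
  qed
  finally have "K = (\<lambda>x. a0 + L x) ` unit_simplex" using C(3) by simp
  then show ?thesis by (rule that[OF lin inj])
qed

lemma norm_sq_sum: "(norm (z :: real^'n::finite))^2 = (\<Sum>i\<in>UNIV. (z $ i)^2)"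
  unfolding power2_norm_eq_inner inner_vec_def by (simp add: power2_eq_square)

lemma unit_simplex_diam:
  assumes "x \<in> unit_simplex" "y \<in> unit_simplex"
  shows "norm (x - y :: real^'n::finite) \<le> sqrt 2"
proof -
  have x: "\<And>i. 0 \<le> x $ i" "(\<Sum>i\<in>UNIV. x $ i) \<le> 1" and y: "\<And>i. 0 \<le> y $ i" "(\<Sum>i\<in>UNIV. y $ i) \<le> 1"
    using assms by (auto simp: unit_simplex_def)
  have x1: "x $ i \<le> 1" for i using member_le_sum[of i UNIV "\<lambda>i. x $ i"] x by auto
  have y1: "y $ i \<le> 1" for i using member_le_sum[of i UNIV "\<lambda>i. y $ i"] y by auto
  have "(norm (x - y))^2 = (\<Sum>i\<in>UNIV. (x $ i - y $ i)^2)" by (simp add: norm_sq_sum)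
  also have "\<dots> \<le> (\<Sum>i\<in>UNIV. x $ i + y $ i)"
  proof (rule sum_mono)
    fix i
    have "x $ i * x $ i \<le> x $ i" using x(1)[of i] x1[of i] by (simp add: mult_left_le)
    moreover have "y $ i * y $ i \<le> y $ i" using y(1)[of i] y1[of i] by (simp add: mult_left_le)
    moreover have "0 \<le> x $ i * y $ i" using x(1) y(1) by simp
    ultimately show "(x $ i - y $ i)^2 \<le> x $ i + y $ i" by (simp add: power2_eq_square algebra_simps)
  qed
  also have "\<dots> \<le> 2" using x(2) y(2) by (simp add: sum.distrib)
  finally have "(norm (x - y))^2 \<le> (sqrt 2)^2" by simp
  then show ?thesis by (rule power2_le_imp_le) simp
qed

lemma rho_bound:
  fixes L :: "real^'n::finite \<Rightarrow> real^'n"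
  assumes L: "linear L" "inj L" and K: "K = (\<lambda>x. a0 + L x) ` unit_simplex"
  obtains Li where "linear Li" "\<And>y. L (Li y) = y" "\<And>x. Li (L x) = x"
    "inball_diam K > 0" "\<And>y. inball_diam K * norm (Li y) \<le> sqrt 2 * norm y"
proof -
  obtain Li where Li: "linear Li" "Li \<circ> L = id" using linear_injective_left_inverse[OF L] by blast
  have LLi: "L \<circ> Li = id" using linear_inverse_left[OF L(1) Li(1)] Li(2) by simp
  have Li1: "Li (L x) = x" for x using Li(2) by (metis comp_apply id_apply)
  have Li2: "L (Li y) = y" for y using LLi by (metis comp_apply id_apply)
  define Rs where "Rs = {r. \<exists>c. ball c r \<subseteq> K}"
  have key: "2 * r * norm (Li y) \<le> sqrt 2 * norm y" if r: "r \<in> Rs" for r y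
  proof (cases "r > 0 \<and> y \<noteq> 0")
    case False
    show ?thesis
    proof (cases "r > 0")
      case False
      then have "2 * r \<le> 0" by simp
      then have "2 * r * norm (Li y) \<le> 0" by (rule mult_nonpos_nonneg) simp
      also have "0 \<le> sqrt 2 * norm y" by simp
      finally show ?thesis .
    next
      case True
      with \<open>\<not> (r > 0 \<and> y \<noteq> 0)\<close> have "y = 0" by simp
      then show ?thesis by (simp add: linear_0[OF Li(1)])
    qed
  next
    case True
    then have rp: "r > 0" and yp: "norm y > 0" by auto
    obtain c where c: "ball c r \<subseteq> K" using r by (auto simp: Rs_def)
    have "s * (2 * norm (Li y)) \<le> sqrt 2 * norm y" if s: "0 < s" "s < r" for s
    proof -
      define u where "u = (s / norm y) *\<^sub>R y"
      have nu: "norm u = s" using yp s by (simp add: u_def)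
      have "c + u \<in> K" "c - u \<in> K" using c nu s by (auto simp: dist_norm)
      then obtain p q where p: "p \<in> unit_simplex" "c + u = a0 + L p"
        and q: "q \<in> unit_simplex" "c - u = a0 + L q" unfolding K by blast
      have "L (p - q) = 2 *\<^sub>R u" using p(2) q(2) linear_diff[OF L(1)]
        by (simp add: algebra_simps scaleR_2) (metis add_diff_cancel_left' diff_add_eq_diff_diff_swap
            diff_diff_eq2 diff_minus_eq_add)
      then have "p - q = Li (2 *\<^sub>R u)" by (metis Li1)
      also have "\<dots> = (2 * s / norm y) *\<^sub>R Li y" unfolding u_def
        using linear_scale[OF Li(1)] by simp
      finally have "norm ((2 * s / norm y) *\<^sub>R Li y) \<le> sqrt 2"
        using unit_simplex_diam[OF p(1) q(1)] by simp
      then have "(2 * s / norm y) * norm (Li y) \<le> sqrt 2" using s yp by simp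
      then show ?thesis using yp by (simp add: field_simps)
    qed
    note sb = this
    have "r * (2 * norm (Li y)) \<le> sqrt 2 * norm y"
    proof (cases "Li y = 0")
      case True then show ?thesis by simp
    next
      case False
      then have np: "2 * norm (Li y) > 0" by simp
      have "r \<le> sqrt 2 * norm y / (2 * norm (Li y))"
      proof (rule dense_le_bounded[OF rp])
        fix w assume "0 < w" "w < r"
        from sb[OF this] show "w \<le> sqrt 2 * norm y / (2 * norm (Li y))"
          using np by (simp add: pos_le_divide_eq)
      qed
      then show ?thesis using np by (simp add: pos_le_divide_eq)
    qed
    then show ?thesis by (simp add: algebra_simps)
  qed
  obtain e :: "real^'n" where e: "norm e = 1" using norm_axis_1 by blast
  have "ball a0 (-1) \<subseteq> K"
  proof
    fix x assume "x \<in> ball a0 (-1)"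
    then have "dist a0 x < -1" by simp
    with zero_le_dist[of a0 x] show "x \<in> K" by linarith
  qed
  then have "(-1::real) \<in> Rs" unfolding Rs_def by blast
  then have ne: "Rs \<noteq> {}" by blast
  have bdd: "bdd_above Rs"
  proof
    fix r assume "r \<in> Rs"
    from key[OF this, of "L e"] show "r \<le> sqrt 2 * norm (L e) / 2" using e by (simp add: Li1 field_simps)
  qed
  have bound: "inball_diam K * norm (Li y) \<le> sqrt 2 * norm y" for y
  proof (cases "Li y = 0")
    case True then show ?thesis by simp
  next
    case False
    then have np: "norm (Li y) > 0" by simp
    have "Sup Rs \<le> sqrt 2 * norm y / (2 * norm (Li y))"
    proof (rule cSup_least[OF ne])
      fix r assume "r \<in> Rs"
      from key[OF this, of y] show "r \<le> sqrt 2 * norm y / (2 * norm (Li y))"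
        using np by (simp add: field_simps)
    qed
    then show ?thesis using np by (simp add: inball_diam_def Rs_def[symmetric] field_simps)
  qed
  have pos: "inball_diam K > 0"
  proof -
    obtain x0 where x0: "x0 \<in> interior (unit_simplex :: (real^'n) set)" using us.int_ne by blast
    obtain \<epsilon> where eps: "\<epsilon> > 0" "ball x0 \<epsilon> \<subseteq> unit_simplex" using x0 mem_interior by blast
    obtain B where B: "B > 0" "\<And>x. norm (Li x) \<le> B * norm x" using linear_bounded_pos[OF Li(1)] by blast
    have "ball (a0 + L x0) (\<epsilon> / B) \<subseteq> K"
    proof
      fix z assume "z \<in> ball (a0 + L x0) (\<epsilon> / B)"
      then have zn: "norm (z - (a0 + L x0)) < \<epsilon> / B" by (simp add: dist_norm norm_minus_commute)
      define p where "p = x0 + Li (z - (a0 + L x0))"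
      have "norm (p - x0) \<le> B * norm (z - (a0 + L x0))" using B(2) by (simp add: p_def)
      also have "\<dots> < \<epsilon>" using zn B(1) by (simp add: field_simps)
      finally have "p \<in> unit_simplex" using eps(2) by (auto simp: dist_norm norm_minus_commute)
      moreover have "z = a0 + L p"
        unfolding p_def using linear_add[OF L(1)] Li2 by simp
      ultimately show "z \<in> K" unfolding K by blast
    qed
    then have "\<epsilon> / B \<in> Rs" by (auto simp: Rs_def)
    then have "\<epsilon> / B \<le> Sup Rs" by (rule cSup_upper[OF _ bdd])
    moreover have "\<epsilon> / B > 0" using eps B by simp
    ultimately show ?thesis by (simp add: inball_diam_def Rs_def[symmetric])
  qed
  show ?thesis by (rule that[OF Li(1) Li2 Li1 pos bound])
qed

lemma linear_comp_expand:
  fixes M :: "real^'n::finite \<Rightarrow> real^'m::finite"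
  assumes "linear M"
  shows "M y $ k = (\<Sum>i\<in>UNIV. y $ i * M (axis i 1) $ k)"
proof -
  have "y = (\<Sum>i\<in>UNIV. y $ i *\<^sub>R axis i 1)"
    using basis_expansion[of y] by (simp add: scalar_mult_eq_scaleR)
  then have "M y = (\<Sum>i\<in>UNIV. y $ i *\<^sub>R M (axis i 1))"
    by (metis (no_types, lifting) assms linear_scale linear_sum sum.cong)
  then show ?thesis by (simp add: sum_component)
qed

lemma poly_fun_affine_coord:
  fixes L :: "real^'n::finite \<Rightarrow> real^'n"
  assumes "linear L"
  shows "poly_fun 1 (\<lambda>z. (a + L z) $ j)"
proof -
  have eq: "(\<lambda>z. (a + L z) $ j) = (\<lambda>z. a $ j + (\<Sum>i\<in>UNIV. L (axis i 1) $ j * z $ i))"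
  proof
    fix z
    show "(a + L z) $ j = a $ j + (\<Sum>i\<in>UNIV. L (axis i 1) $ j * z $ i)"
      using linear_comp_expand[OF assms, of z j] by (simp add: mult.commute)
  qed
  have "poly_fun 1 (\<lambda>z. a $ j + (\<Sum>i\<in>UNIV. L (axis i 1) $ j * z $ i))"
  proof (rule poly_fun_add[OF poly_fun_const])
    show "poly_fun 1 (\<lambda>z. \<Sum>i\<in>UNIV. L (axis i 1) $ j * z $ i)"
      by (rule poly_fun_sum, simp, rule poly_fun_cmult[OF poly_fun_coord])
  qed
  then show ?thesis by (simp only: eq)
qed

lemma poly_fun_affine:
  fixes L :: "real^'n::finite \<Rightarrow> real^'n"
  assumes "linear L" "poly_fun q f"
  shows "poly_fun q (\<lambda>z. f (a + L z))"
  by (rule poly_fun_compose[OF assms(2) poly_fun_affine_coord[OF assms(1)]])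

lemma partial_affine:
  fixes f :: "real^'n::finite \<Rightarrow> real" and L :: "real^'n \<Rightarrow> real^'n"
  assumes L: "linear L" and f: "f differentiable (at (a + L x))"
  shows "partial k (\<lambda>y. f (a + L y)) x = (\<Sum>j\<in>UNIV. L (axis k 1) $ j * partial j f (a + L x))"
proof -
  obtain D where D: "(f has_derivative D) (at (a + L x))" using f unfolding differentiable_def by blast
  have lD: "linear D" using D has_derivative_linear by blast
  have G: "((\<lambda>y. a + L y) has_derivative (\<lambda>h. 0 + L h)) (at x)"
    by (rule has_derivative_add[OF has_derivative_const linear_imp_has_derivative[OF L]])
  have "((\<lambda>y. f (a + L y)) has_derivative (\<lambda>h. D (0 + L h))) (at x)"
    by (rule has_derivative_compose[OF G]) (simp add: D)
  then have "partial k (\<lambda>y. f (a + L y)) x = D (L (axis k 1))" by (simp add: partial_eq)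
  also have "\<dots> = (\<Sum>j\<in>UNIV. L (axis k 1) $ j * D (axis j 1))"
  proof -
    have "L (axis k 1) = (\<Sum>j\<in>UNIV. L (axis k 1) $ j *\<^sub>R axis j 1)"
      using basis_expansion[of "L (axis k 1)"] by (simp add: scalar_mult_eq_scaleR)
    then have "D (L (axis k 1)) = D (\<Sum>j\<in>UNIV. L (axis k 1) $ j *\<^sub>R axis j 1)" by simp
    also have "\<dots> = (\<Sum>j\<in>UNIV. L (axis k 1) $ j * D (axis j 1))"
      by (simp add: linear_sum[OF lD] linear_scale[OF lD])
    finally show ?thesis .
  qed
  also have "\<dots> = (\<Sum>j\<in>UNIV. L (axis k 1) $ j * partial j f (a + L x))"
    by (simp add: partial_eq[OF D])
  finally show ?thesis .
qed

lemma div_identity: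
  fixes v :: "real^'n::finite \<Rightarrow> real^'n" and L Li :: "real^'n \<Rightarrow> real^'n"
  assumes L: "linear L" and Li: "linear Li" "\<And>y. L (Li y) = y"
    and pv: "\<And>i. poly_fun q (\<lambda>x. v x $ i)"
  shows "divergence v (a + L x) = (\<Sum>k\<in>UNIV. partial k (\<lambda>z. Li (v (a + L z)) $ k) x)"
proof -
  define c where "c i k = Li (axis i 1) $ k" for i k
  have wexp: "(\<lambda>z. Li (v (a + L z)) $ k) = (\<lambda>z. \<Sum>i\<in>UNIV. c i k * v (a + L z) $ i)" for k
  proof
    fix z
    show "Li (v (a + L z)) $ k = (\<Sum>i\<in>UNIV. c i k * v (a + L z) $ i)"
      using linear_comp_expand[OF Li(1), of "v (a + L z)" k] by (simp add: c_def mult.commute)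
  qed
  have dvi: "(\<lambda>z. v (a + L z) $ i) differentiable (at z)" for i z
    using poly_differentiable[OF poly_fun_affine[OF L pv]] .
  have dv: "(\<lambda>z. v z $ i) differentiable (at z)" for i z
    using poly_differentiable[OF pv] .
  have "(\<Sum>k\<in>UNIV. partial k (\<lambda>z. Li (v (a + L z)) $ k) x)
      = (\<Sum>k\<in>UNIV. \<Sum>i\<in>UNIV. c i k * partial k (\<lambda>z. v (a + L z) $ i) x)"
    unfolding wexp
    by (simp add: partial_sum partial_cmult dvi differentiable_mult)
  also have "\<dots> = (\<Sum>k\<in>UNIV. \<Sum>i\<in>UNIV. c i k * (\<Sum>j\<in>UNIV. L (axis k 1) $ j * partial j (\<lambda>z. v z $ i) (a + L x)))"
    by (simp add: partial_affine[OF L dv])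
  also have "\<dots> = (\<Sum>i\<in>UNIV. \<Sum>j\<in>UNIV. (\<Sum>k\<in>UNIV. c i k * L (axis k 1) $ j) * partial j (\<lambda>z. v z $ i) (a + L x))"
  proof -
    have "(\<Sum>k\<in>UNIV. \<Sum>i\<in>UNIV. c i k * (\<Sum>j\<in>UNIV. L (axis k 1) $ j * partial j (\<lambda>z. v z $ i) (a + L x)))
      = (\<Sum>k\<in>UNIV. \<Sum>i\<in>UNIV. \<Sum>j\<in>UNIV. c i k * L (axis k 1) $ j * partial j (\<lambda>z. v z $ i) (a + L x))"
      by (simp add: sum_distrib_left mult.assoc)
    also have "\<dots> = (\<Sum>i\<in>UNIV. \<Sum>k\<in>UNIV. \<Sum>j\<in>UNIV. c i k * L (axis k 1) $ j * partial j (\<lambda>z. v z $ i) (a + L x))"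
      by (rule sum.swap)
    also have "\<dots> = (\<Sum>i\<in>UNIV. \<Sum>j\<in>UNIV. \<Sum>k\<in>UNIV. c i k * L (axis k 1) $ j * partial j (\<lambda>z. v z $ i) (a + L x))"
      by (rule sum.cong[OF refl], rule sum.swap)
    also have "\<dots> = (\<Sum>i\<in>UNIV. \<Sum>j\<in>UNIV. (\<Sum>k\<in>UNIV. c i k * L (axis k 1) $ j) * partial j (\<lambda>z. v z $ i) (a + L x))"
      by (simp add: sum_distrib_right)
    finally show ?thesis .
  qed
  also have "\<dots> = (\<Sum>i\<in>UNIV. \<Sum>j\<in>UNIV. (if j = i then 1 else 0) * partial j (\<lambda>z. v z $ i) (a + L x))"
  proof -
    have "(\<Sum>k\<in>UNIV. c i k * L (axis k 1) $ j) = (if j = i then 1 else 0)" for i j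
    proof -
      have "(\<Sum>k\<in>UNIV. c i k * L (axis k 1) $ j) = L (Li (axis i 1)) $ j"
        using linear_comp_expand[OF L, of "Li (axis i 1)" j] by (simp add: c_def)
      also have "\<dots> = (if j = i then 1 else 0)" by (simp add: Li(2) axis_def)
      finally show ?thesis .
    qed
    then show ?thesis by simp
  qed
  also have "\<dots> = (\<Sum>i\<in>UNIV. partial i (\<lambda>z. v z $ i) (a + L x))"
    by (simp add: if_distrib[of "\<lambda>t. t * _"] sum.delta cong: if_cong)
  finally show ?thesis by (simp add: divergence_def)
qed

lemma RTN_poly:
  assumes "v \<in> RTN p"
  shows "poly_fun (p + 1) (\<lambda>x. v x $ i)"
proof -
  obtain w r where w: "vpoly_fun p w" and r: "poly_fun p r" and v: "v = (\<lambda>x. w x + r x *\<^sub>R x)"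
    using assms unfolding RTN_def by blast
  have "poly_fun (p + 1) (\<lambda>x. w x $ i)"
    using w unfolding vpoly_fun_def by (auto intro: poly_fun_mono)
  moreover have "poly_fun (p + 1) (\<lambda>x. r x * x $ i)"
    by (rule poly_fun_mult[OF r poly_fun_coord])
  ultimately show ?thesis unfolding v by (simp add: poly_fun_add)
qed

lemma sq_sum_le: "(\<Sum>k\<in>(UNIV::'n::finite set). f k)^2 \<le> real CARD('n) * (\<Sum>k\<in>UNIV. (f k)^2)"
  using sum_squared_le_sum_of_squares[of f UNIV] by (simp add: mult.commute)

lemma L2_sq:
  assumes "compact S" "continuous_on S f"
  shows "(L2norm S f)^2 = integral S (\<lambda>x. (f x)^2)"
proof -
  have "0 \<le> integral S (\<lambda>x. (f x)^2)"
    by (rule integral_nonneg) (auto intro!: int_cont[OF assms(1)] continuous_intros assms(2))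
  then show ?thesis by (simp add: L2norm_def)
qed

theorem lemmaA5:
  fixes T :: "(real^'n::finite) set set" and K :: "(real^'n) set"
    and p :: nat and v :: "real^'n \<Rightarrow> real^'n"
  assumes "CARD('n) \<ge> 2"
    and "simplicial_mesh T" and "K \<in> T"
    and "v \<in> RTN p"
  shows "diameter K * L2norm K (divergence v)
         \<le> sqrt (2 * real CARD('n)) * shape_reg T * Cqd TYPE('n) (p + 1) * L2norm_vec K v"
proof -
  have fT: "finite T" and sK: "(int CARD('n)) simplex K"
    using assms(2,3) unfolding simplicial_mesh_def by auto
  obtain a0 and L :: "real^'n \<Rightarrow> real^'n" where L: "linear L" "inj L"
    and K: "K = (\<lambda>x. a0 + L x) ` unit_simplex"
    using simplex_param[OF sK] by blast
  obtain Li where Li: "linear Li" "\<And>y. L (Li y) = y" "\<And>x. Li (L x) = x"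
    and rho: "inball_diam K > 0" "\<And>y. inball_diam K * norm (Li y) \<le> sqrt 2 * norm y"
    using rho_bound[OF L K] by blast
  obtain lam where lam: "lam > 0" and cv: "\<And>S (k::real^'n \<Rightarrow> real). compact S \<Longrightarrow>
      continuous_on ((\<lambda>x. a0 + L x) ` S) k \<Longrightarrow>
      integral ((\<lambda>x. a0 + L x) ` S) k = lam * integral S (\<lambda>x. k (a0 + L x))"
    using cov[OF L, of a0] by blast
  define q where "q = p + 1"
  define C where "C = Cqd TYPE('n) q"
  define d where "d = real CARD('n)"
  define \<rho> where "\<rho> = inball_diam K"
  define G where "G x = a0 + L x" for x
  define wh where "wh z = Li (v (G z))" for z
  have Ue: "unit_simplex = (unit_simplex :: (real^'n) set)" ..
  have cpt: "compact (unit_simplex :: (real^'n) set)" by (rule us.cpt)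
  have C0: "C \<ge> 0" unfolding C_def by (rule Cqd_prop(1))
  have pv: "poly_fun q (\<lambda>x. v x $ i)" for i unfolding q_def by (rule RTN_poly[OF assms(4)])
  have pvG: "poly_fun q (\<lambda>z. v (G z) $ i)" for i
    unfolding G_def by (rule poly_fun_affine[OF L(1) pv])
  have whexp: "wh z $ k = (\<Sum>i\<in>UNIV. Li (axis i 1) $ k * v (G z) $ i)" for z k
    using linear_comp_expand[OF Li(1), of "v (G z)" k] by (simp add: wh_def mult.commute)
  have pwh: "poly_fun q (\<lambda>z. wh z $ k)" for k
  proof -
    have "poly_fun q (\<lambda>z. \<Sum>i\<in>UNIV. Li (axis i 1) $ k * v (G z) $ i)"
      by (rule poly_fun_sum, simp, rule poly_fun_cmult[OF pvG])
    then show ?thesis by (simp only: whexp)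
  qed
  have ppwh: "pp (\<lambda>z. wh z $ k)" for k using pwh unfolding pp_def by blast
  have ppd: "pp (partial k (\<lambda>z. wh z $ k))" for k by (rule pp_partial'[OF ppwh])
  have divG: "divergence v (G z) = (\<Sum>k\<in>UNIV. partial k (\<lambda>z. wh z $ k) z)" for z
    unfolding G_def wh_def by (rule div_identity[OF L(1) Li(1) Li(2) pv])
  have cdiv: "continuous_on S (divergence v)" for S
  proof -
    have "divergence v = (\<lambda>x. \<Sum>i\<in>UNIV. partial i (\<lambda>y. v y $ i) x)"
      by (simp add: divergence_def[abs_def])
    moreover have "continuous_on S (\<lambda>x. \<Sum>i\<in>UNIV. partial i (\<lambda>y. v y $ i) x)"
      by (intro continuous_on_sum pp_continuous pp_partial') (auto simp: pp_def intro: pv)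
    ultimately show ?thesis by simp
  qed
  have cv_comp: "continuous_on S (\<lambda>x. v x $ i)" for S i using poly_continuous[OF pv] .
  have cnv: "continuous_on S (\<lambda>x. (norm (v x))^2)" for S
  proof -
    have eq: "(\<lambda>x. (norm (v x))^2) = (\<lambda>x. \<Sum>i\<in>UNIV. (v x $ i)^2)" by (simp add: norm_sq_sum)
    have "continuous_on S (\<lambda>x. \<Sum>i\<in>UNIV. (v x $ i)^2)"
      by (intro continuous_intros cv_comp)
    then show ?thesis by (simp only: eq)
  qed
  have cvG: "continuous_on S (\<lambda>z. (norm (v (G z)))^2)" for S
  proof -
    have eq: "(\<lambda>z. (norm (v (G z)))^2) = (\<lambda>z. \<Sum>i\<in>UNIV. (v (G z) $ i)^2)" by (simp add: norm_sq_sum)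
    have "continuous_on S (\<lambda>z. \<Sum>i\<in>UNIV. (v (G z) $ i)^2)"
      by (intro continuous_intros poly_continuous[OF pvG])
    then show ?thesis by (simp only: eq)
  qed
  define A where "A = integral K (\<lambda>x. (divergence v x)^2)"
  define B where "B = integral K (\<lambda>x. (norm (v x))^2)"
  have cpK: "compact K" unfolding K
    by (rule compact_continuous_image[OF _ cpt]) (intro continuous_intros linear_continuous_on
        L(1)[unfolded linear_conv_bounded_linear])
  have A0: "A \<ge> 0" unfolding A_def
    by (rule integral_nonneg) (auto intro!: int_cont[OF cpK] continuous_intros cdiv)
  have B0: "B \<ge> 0" unfolding B_def
    by (rule integral_nonneg) (auto intro!: int_cont[OF cpK] cnv)
  have A_eq: "A = lam * integral unit_simplex (\<lambda>z. (\<Sum>k\<in>UNIV. partial k (\<lambda>z. wh z $ k) z)^2)"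
  proof -
    have "A = lam * integral unit_simplex (\<lambda>z. (divergence v (a0 + L z))^2)"
      unfolding A_def K by (rule cv[OF cpt]) (intro continuous_intros cdiv)
    then show ?thesis using divG by (simp add: G_def)
  qed
  have B_eq: "B = lam * integral unit_simplex (\<lambda>z. (norm (v (G z)))^2)"
    unfolding B_def K G_def by (rule cv[OF cpt cnv])
  define I where "I k = integral unit_simplex (\<lambda>z. (wh z $ k)^2)" for k
  have cwh: "continuous_on S (\<lambda>z. wh z $ k)" for S k by (rule pp_continuous[OF ppwh])
  have cpd: "continuous_on S (partial k (\<lambda>z. wh z $ k))" for S k by (rule pp_continuous[OF ppd])
  have step1: "integral unit_simplex (\<lambda>z. (\<Sum>k\<in>UNIV. partial k (\<lambda>z. wh z $ k) z)^2)
      \<le> d * (\<Sum>k\<in>UNIV. integral unit_simplex (\<lambda>z. (partial k (\<lambda>z. wh z $ k) z)^2))"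
  proof -
    have "integral unit_simplex (\<lambda>z. (\<Sum>k\<in>UNIV. partial k (\<lambda>z. wh z $ k) z)^2)
        \<le> integral unit_simplex (\<lambda>z. d * (\<Sum>k\<in>UNIV. (partial k (\<lambda>z. wh z $ k) z)^2))"
      by (rule integral_le) (auto intro!: int_cont[OF cpt] continuous_intros cpd simp: d_def sq_sum_le)
    also have "\<dots> = d * (\<Sum>k\<in>UNIV. integral unit_simplex (\<lambda>z. (partial k (\<lambda>z. wh z $ k) z)^2))"
      by (simp add: integral_sum int_cont[OF cpt] continuous_intros cpd)
    finally show ?thesis .
  qed
  have step2: "integral unit_simplex (\<lambda>z. (partial k (\<lambda>z. wh z $ k) z)^2) \<le> C^2 * I k" for k
  proof -
    have "L2norm unit_simplex (partial k (\<lambda>z. wh z $ k)) \<le> C * L2norm unit_simplex (\<lambda>z. wh z $ k)"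
      unfolding C_def by (rule Cqd_prop(2)[OF pwh])
    moreover have "0 \<le> L2norm unit_simplex (partial k (\<lambda>z. wh z $ k))"
      using us.N_nonneg us.N_L2 by metis
    ultimately have "(L2norm unit_simplex (partial k (\<lambda>z. wh z $ k)))^2 \<le> (C * L2norm unit_simplex (\<lambda>z. wh z $ k))^2"
      by (rule power_mono)
    then show ?thesis
      by (simp add: L2_sq[OF cpt cpd] L2_sq[OF cpt cwh] power_mult_distrib I_def)
  qed
  have step3: "(\<Sum>k\<in>UNIV. I k) \<le> (2 / \<rho>^2) * integral unit_simplex (\<lambda>z. (norm (v (G z)))^2)"
  proof -
    have "(\<Sum>k\<in>UNIV. I k) = integral unit_simplex (\<lambda>z. \<Sum>k\<in>UNIV. (wh z $ k)^2)"
      unfolding I_def by (simp add: integral_sum int_cont[OF cpt] continuous_intros cwh)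
    also have "\<dots> = integral unit_simplex (\<lambda>z. (norm (wh z))^2)" by (simp add: norm_sq_sum)
    also have "\<dots> \<le> integral unit_simplex (\<lambda>z. (2 / \<rho>^2) * (norm (v (G z)))^2)"
    proof (rule integral_le)
      show "(\<lambda>z. (norm (wh z))^2) integrable_on unit_simplex"
        unfolding norm_sq_sum by (auto intro!: int_cont[OF cpt] continuous_intros cwh)
      show "(\<lambda>z. (2 / \<rho>^2) * (norm (v (G z)))^2) integrable_on unit_simplex"
        by (rule int_cont[OF cpt], rule continuous_on_mult[OF continuous_on_const cvG])
      fix z
      have rp: "\<rho> > 0" using rho(1) by (simp add: \<rho>_def)
      have "\<rho> * norm (wh z) \<le> sqrt 2 * norm (v (G z))" unfolding wh_def \<rho>_def by (rule rho(2))
      then have "norm (wh z) \<le> sqrt 2 * norm (v (G z)) / \<rho>" using rp by (simp add: field_simps)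
      then have "(norm (wh z))^2 \<le> (sqrt 2 * norm (v (G z)) / \<rho>)^2" by (rule power_mono) simp
      also have "\<dots> = (2 / \<rho>^2) * (norm (v (G z)))^2" by (simp add: power_divide power_mult_distrib)
      finally show "(norm (wh z))^2 \<le> (2 / \<rho>^2) * (norm (v (G z)))^2" .
    qed
    also have "\<dots> = (2 / \<rho>^2) * integral unit_simplex (\<lambda>z. (norm (v (G z)))^2)" by simp
    finally show ?thesis .
  qed
  have AB: "A \<le> (2 * d * C^2 / \<rho>^2) * B"
  proof -
    have "A \<le> lam * (d * (\<Sum>k\<in>UNIV. C^2 * I k))"
    proof -
      have s2: "(\<Sum>k\<in>UNIV. integral unit_simplex (\<lambda>z. (partial k (\<lambda>z. wh z $ k) z)^2)) \<le> (\<Sum>k\<in>UNIV. C^2 * I k)"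
        by (rule sum_mono) (rule step2)
      have "d \<ge> 0" by (simp add: d_def)
      then have "integral unit_simplex (\<lambda>z. (\<Sum>k\<in>UNIV. partial k (\<lambda>z. wh z $ k) z)^2) \<le> d * (\<Sum>k\<in>UNIV. C^2 * I k)"
        using step1 s2 by (meson mult_left_mono order_trans)
      then show ?thesis unfolding A_eq using lam by (simp add: mult_left_mono)
    qed
    also have "\<dots> = lam * d * C^2 * (\<Sum>k\<in>UNIV. I k)" by (simp add: sum_distrib_left mult.assoc)
    also have "\<dots> \<le> lam * d * C^2 * ((2 / \<rho>^2) * integral unit_simplex (\<lambda>z. (norm (v (G z)))^2))"
      by (rule mult_left_mono[OF step3]) (use lam in \<open>simp add: d_def\<close>)
    also have "\<dots> = (2 * d * C^2 / \<rho>^2) * B" unfolding B_eq by (simp add: field_simps)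
    finally show ?thesis .
  qed
  have rp: "\<rho> > 0" using rho(1) by (simp add: \<rho>_def)
  have "sqrt A \<le> sqrt ((2 * d * C^2 / \<rho>^2) * B)" using AB by simp
  also have "\<dots> = sqrt (2 * d) * C / \<rho> * sqrt B"
    using C0 rp by (simp add: real_sqrt_mult real_sqrt_divide)
  finally have sA: "sqrt A \<le> sqrt (2 * d) * C / \<rho> * sqrt B" .
  have h0: "diameter K \<ge> 0" by (rule diameter_ge_0[OF compact_imp_bounded[OF cpK]])
  have th: "diameter K / \<rho> \<le> shape_reg T"
    unfolding shape_reg_def \<rho>_def using fT assms(3) by (intro Max_ge) auto
  have "diameter K * L2norm K (divergence v) = diameter K * sqrt A" by (simp add: L2norm_def A_def)
  also have "\<dots> \<le> diameter K * (sqrt (2 * d) * C / \<rho> * sqrt B)" by (rule mult_left_mono[OF sA h0])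
  also have "\<dots> = sqrt (2 * d) * (diameter K / \<rho>) * C * sqrt B" by simp
  also have "\<dots> \<le> sqrt (2 * d) * shape_reg T * C * sqrt B"
    using th C0 B0 by (intro mult_right_mono mult_left_mono) (auto simp: d_def)
  finally show ?thesis by (simp add: d_def C_def q_def L2norm_vec_def B_def)
qed

end
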